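(* Let $p,q\in\mathcal{P}_d(\mathbb{R})$ and let $l$ be an integer with $0\le l\le d$ such that $\mathcal{F}_q(x)\le\mathcal{F}_p(x)+\frac{l}{d}$ for all $x\in\mathbb{R}$. Then there exist $q=q^{(0)},q^{(1)},\dots,q^{(l)}\in\mathcal{P}_d(\mathbb{R})$ with $q^{(k-1)}\lessdot q^{(k)}$ for $k=1,\dots,l$ and $p\le q^{(l)}$. Consequently, for every $r\in\mathcal{P}_d(\mathbb{R})$, \[ \mathcal{F}_{q\boxplus_d r}(x)\le\mathcal{F}_{p\boxplus_d r}(x)+\tfrac{l}{d}\quad\text{for all }x\in\mathbb{R}, \] and for every $r\in\mathcal{P}_d([0,\infty))$, \[ \mathcal{F}_{q\boxtimes_d r}(x)\le\mathcal{F}_{p\boxtimes_d r}(x)+\tfrac{l}{d}\quad\text{for all }x\in\mathbb{R}. \]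
   Context: $\mathcal{P}_d(K)$ is the set of monic degree-$d$ polynomials with all roots in $K$. For $p$ with roots $\lambda_i$, write $p(x)=\sum_{k=0}^d(-1)^k\binom{d}{k}\tilde e_k(p)x^{d-k}$ with $\tilde e_k(p)=\binom{d}{k}^{-1}e_k(\lambda_1,\dots,\lambda_d)$. Finite free convolutions: $\tilde e_k(p\boxplus_d q)=\sum_{i=0}^k\binom{k}{i}\tilde e_i(p)\tilde e_{k-i}(q)$ and $\tilde e_k(p\boxtimes_d q)=\tilde e_k(p)\tilde e_k(q)$. For real-rooted $p$, $\mathcal{F}_p(x)=\frac1d\#\{i:\lambda_i\le x\}$ (CDF of the empirical root distribution). Partial order: $p\le q$ means $\mathcal{F}_q(x)\le\mathcal{F}_p(x)$ for all $x$. Interlacing: for $p,q\in\mathcal{P}_d(\mathbb{R})$ with roots in non-decreasing order, $p\lessdot q$ means $\lambda_1(p)\le\lambda_1(q)\le\lambda_2(p)\le\lambda_2(q)\le\dots\le\lambda_d(p)\le\lambda_d(q)$. *)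

theory Defs
  imports "HOL-Computational_Algebra.Polynomial" Complex_Main
begin

definition Pd :: "nat \<Rightarrow> real set \<Rightarrow> real poly set" where
  "Pd d K = {p. \<exists>xs. length xs = d \<and> set xs \<subseteq> K \<and> p = (\<Prod>x\<leftarrow>xs. [:-x, 1:])}"

text \<open>Normalized elementary symmetric functions: coeff p (d-k) = (-1)^k (d choose k) etil_k(p).\<close>
definition etil :: "nat \<Rightarrow> real poly \<Rightarrow> nat \<Rightarrow> real" where
  "etil d p k = (-1)^k * coeff p (d - k) / real (d choose k)"

definition poly_of_etil :: "nat \<Rightarrow> (nat \<Rightarrow> real) \<Rightarrow> real poly" where
  "poly_of_etil d e = (\<Sum>k\<le>d. monom ((-1)^k * real (d choose k) * e k) (d - k))"

definition boxplus :: "nat \<Rightarrow> real poly \<Rightarrow> real poly \<Rightarrow> real poly" where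
  "boxplus d p q = poly_of_etil d
     (\<lambda>k. \<Sum>i\<le>k. real (k choose i) * etil d p i * etil d q (k - i))"

definition boxtimes :: "nat \<Rightarrow> real poly \<Rightarrow> real poly \<Rightarrow> real poly" where
  "boxtimes d p q = poly_of_etil d (\<lambda>k. etil d p k * etil d q k)"

definition rootcdf :: "nat \<Rightarrow> real poly \<Rightarrow> real \<Rightarrow> real" where
  "rootcdf d p x = real (\<Sum>a\<in>{a. poly p a = 0 \<and> a \<le> x}. order a p) / real d"

definition rleq :: "nat \<Rightarrow> real poly \<Rightarrow> real poly \<Rightarrow> bool" where
  "rleq d p q \<longleftrightarrow> (\<forall>x. rootcdf d q x \<le> rootcdf d p x)"

definition interlace :: "nat \<Rightarrow> real poly \<Rightarrow> real poly \<Rightarrow> bool" where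
  "interlace d p q \<longleftrightarrow> (\<exists>xs ys. length xs = d \<and> length ys = d \<and> sorted xs \<and> sorted ys \<and>
     p = (\<Prod>x\<leftarrow>xs. [:-x, 1:]) \<and> q = (\<Prod>y\<leftarrow>ys. [:-y, 1:]) \<and>
     (\<forall>i<d. xs ! i \<le> ys ! i \<and> (Suc i < d \<longrightarrow> ys ! i \<le> xs ! Suc i)))"

end

theory Submission
  imports Defs "HOL-Computational_Algebra.Fundamental_Theorem_Algebra"
begin

fun esym :: "'a::comm_ring_1 list \<Rightarrow> nat \<Rightarrow> 'a" where
  "esym [] k = (if k = 0 then 1 else 0)"
| "esym (a # as) 0 = 1"
| "esym (a # as) (Suc k) = esym as (Suc k) + a * esym as k"

lemma esym_0[simp]: "esym as 0 = 1"
  by (cases as) auto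

lemma esym_gt: "length as < k \<Longrightarrow> esym as k = 0"
proof (induction as arbitrary: k)
  case Nil then show ?case by simp
next
  case (Cons a as) then show ?case by (cases k) auto
qed

lemma esym_map_of_real: "esym (map of_real as) k = (of_real (esym as k) :: 'a::{real_algebra_1,comm_ring_1})"
proof (induction as arbitrary: k)
  case Nil then show ?case by simp
next
  case (Cons a as) then show ?case by (cases k) auto
qed

lemma esym_scale: "esym (map (\<lambda>b. t * b) bs) k = t ^ k * esym bs k"
proof (induction bs arbitrary: k)
  case Nil then show ?case by simp
next
  case (Cons a as) then show ?case by (cases k) (auto simp: algebra_simps)
qed

lemma esym_replicate: "esym (replicate n t) k = of_nat (n choose k) * t ^ k"
proof (induction n arbitrary: k)
  case 0 then show ?case by (cases k) auto
next
  case (Suc n) then show ?case by (cases k) (auto simp: algebra_simps)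
qed

lemma coeff_prod_esym:
  fixes as :: "'a::comm_ring_1 list"
  shows "k \<le> length as \<Longrightarrow> coeff (\<Prod>x\<leftarrow>as. [:-x, 1:]) (length as - k) = (-1)^k * esym as k"
proof (induction as arbitrary: k)
  case Nil then show ?case by simp
next
  case (Cons a as)
  let ?P = "(\<Prod>x\<leftarrow>as. [:-x, 1:])"
  have eq: "(\<Prod>x\<leftarrow>a#as. [:-x, 1:]) = smult (-a) ?P + pCons 0 ?P"
    by (simp add: mult_pCons_left)
  have hi: "coeff ?P j = 0" if "j > length as" for j
  proof -
    have "degree ?P \<le> length as"
      by (rule order.trans[OF degree_prod_list_le]) (auto simp: sum_list_triv intro: order.trans[OF sum_list_mono[where g="\<lambda>_. 1"]])
    then show ?thesis using that by (simp add: coeff_eq_0)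
  qed
  show ?case
  proof (cases k)
    case 0
    then show ?thesis using Cons.IH[of 0] hi[of "Suc (length as)"] by (simp add: eq)
  next
    case (Suc j)
    show ?thesis
    proof (cases "j = length as")
      case True
      then show ?thesis using Suc Cons.IH[of j] by (simp add: eq esym_gt)
    next
      case False
      then have jl: "j < length as" using Cons.prems Suc by simp
      have e1: "length (a#as) - k = Suc (length as - Suc j)" using jl Suc by simp
      have e2: "length as - j = Suc (length as - Suc j)" using jl by simp
      show ?thesis using Cons.IH[of j] Cons.IH[of "Suc j"] jl Suc
        by (simp add: eq e1 e2 algebra_simps)
    qed
  qed
qed


lemma sum_list_Re: "Re (sum_list xs) = (\<Sum>x\<leftarrow>xs. Re x)"
  by (induction xs) auto
lemma sum_list_Im: "Im (sum_list xs) = (\<Sum>x\<leftarrow>xs. Im x)"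
  by (induction xs) auto

lemma sq_sum_expand:
  fixes f :: "'b \<Rightarrow> real"
  shows "(\<Sum>x\<leftarrow>xs. (f x - c)^2) = (\<Sum>x\<leftarrow>xs. (f x)^2) - 2 * c * (\<Sum>x\<leftarrow>xs. f x) + real (length xs) * c^2"
  by (induction xs) (auto simp: power2_eq_square algebra_simps)

lemma cs_aux:
  fixes vs :: "complex list" and u :: complex
  assumes "sum_list vs = of_nat n * u" "length vs \<le> n"
  shows "real n * (Re u^2 + Im u^2) \<le> (\<Sum>v\<leftarrow>vs. Re v^2 + Im v^2)"
proof -
  have r: "(\<Sum>v\<leftarrow>vs. Re v) = real n * Re u" using arg_cong[OF assms(1), of Re] by (simp add: sum_list_Re)
  have i: "(\<Sum>v\<leftarrow>vs. Im v) = real n * Im u" using arg_cong[OF assms(1), of Im] by (simp add: sum_list_Im)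
  have e1: "(\<Sum>v\<leftarrow>vs. (Re v - Re u)^2) = (\<Sum>v\<leftarrow>vs. (Re v)^2) - 2 * Re u * (\<Sum>v\<leftarrow>vs. Re v) + real (length vs) * (Re u)^2"
    by (rule sq_sum_expand)
  have e2: "(\<Sum>v\<leftarrow>vs. (Im v - Im u)^2) = (\<Sum>v\<leftarrow>vs. (Im v)^2) - 2 * Im u * (\<Sum>v\<leftarrow>vs. Im v) + real (length vs) * (Im u)^2"
    by (rule sq_sum_expand)
  have "0 \<le> (\<Sum>v\<leftarrow>vs. (Re v - Re u)^2) + (\<Sum>v\<leftarrow>vs. (Im v - Im u)^2)"
    by (intro add_nonneg_nonneg sum_list_nonneg) auto
  also have "\<dots> = (\<Sum>v\<leftarrow>vs. Re v^2) + (\<Sum>v\<leftarrow>vs. Im v^2) - 2 * real n * (Re u^2 + Im u^2)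
       + real (length vs) * (Re u^2 + Im u^2)"
    unfolding e1 e2 r i by (simp add: algebra_simps power2_eq_square)
  also have "\<dots> \<le> (\<Sum>v\<leftarrow>vs. Re v^2) + (\<Sum>v\<leftarrow>vs. Im v^2) - real n * (Re u^2 + Im u^2)"
  proof -
    have "real (length vs) * (Re u^2 + Im u^2) \<le> real n * (Re u^2 + Im u^2)"
      using assms(2) by (intro mult_right_mono) auto
    then show ?thesis by simp
  qed
  finally show ?thesis by (simp add: sum_list_addf)
qed

lemma Im_inv_formula:
  fixes d :: complex
  assumes "d \<noteq> 0"
  shows "Im (1 / d) = - Im d * (Re (1/d)^2 + Im (1/d)^2)"
proof -
  define N where "N = Re d ^ 2 + Im d ^ 2"
  have N: "N \<noteq> 0" using assms unfolding N_def by (simp add: complex_eq_iff add_nonneg_eq_0_iff)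
  have re: "Re (1/d) = Re d / N" and im: "Im (1/d) = - Im d / N"
    by (simp_all add: Re_divide Im_divide N_def power2_eq_square)
  have "Re (1/d)^2 + Im (1/d)^2 = (Re d ^ 2 + Im d ^ 2) / N^2"
    unfolding re im by (simp add: power_divide add_divide_distrib)
  also have "\<dots> = 1 / N" using N unfolding N_def[symmetric] by (simp add: power2_eq_square)
  finally have "Re (1/d)^2 + Im (1/d)^2 = 1 / N" .
  then show ?thesis unfolding im by simp
qed

lemma laguerre_ineq:
  fixes t b :: complex and ws :: "complex list"
  assumes t: "Im t \<le> 0" and b: "Im b \<le> 0" and ws: "\<forall>w\<in>set ws. 0 < Im w"
    and len: "length ws \<le> n" and n: "1 \<le> n"
  shows "of_nat n + (b - t) * (\<Sum>w\<leftarrow>ws. 1 / (t - w)) \<noteq> 0"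
proof
  assume eq: "of_nat n + (b - t) * (\<Sum>w\<leftarrow>ws. 1 / (t - w)) = 0"
  define S where "S = (\<Sum>w\<leftarrow>ws. 1 / (t - w))"
  have bt: "b \<noteq> t" using eq n by auto
  define u where "u = 1 / (t - b)"
  have Su: "S = of_nat n * u" using eq bt unfolding S_def u_def
    by (simp add: field_simps)
  define nv where "nv = (\<lambda>v::complex. Re v^2 + Im v^2)"
  have wne: "t - w \<noteq> 0" if "w \<in> set ws" for w using that ws t by auto
  have ne: "ws \<noteq> []"
  proof
    assume "ws = []"
    then have "of_nat n * u = 0" using Su by (simp add: S_def)
    moreover have "u \<noteq> 0" using bt by (simp add: u_def)
    ultimately show False using n by simp
  qed
  have ImS: "Im S = (\<Sum>w\<leftarrow>ws. (Im w - Im t) * nv (1/(t-w)))"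
    unfolding S_def sum_list_Im map_map comp_def
  proof (intro arg_cong[where f=sum_list] map_cong refl)
    fix w assume "w \<in> set ws"
    then have "Im (1 / (t - w)) = - Im (t - w) * nv (1/(t-w))"
      unfolding nv_def by (rule Im_inv_formula[OF wne])
    then show "Im (1 / (t - w)) = (Im w - Im t) * nv (1/(t-w))" by (simp add: algebra_simps)
  qed
  have Imu: "Im u = (Im b - Im t) * nv u"
    unfolding u_def nv_def using bt by (subst Im_inv_formula) (auto simp: algebra_simps)
  have pos: "0 < (\<Sum>w\<leftarrow>ws. Im w * nv (1/(t-w)))"
  proof -
    obtain w ws' where wws: "ws = w # ws'" using ne by (cases ws) auto
    have "0 < Im w * nv (1/(t-w))"
    proof -
      have "1/(t-w) \<noteq> 0" using wne[of w] wws by auto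
      then have "0 < nv (1/(t-w))" unfolding nv_def
        by (simp add: complex_eq_iff add_pos_nonneg sum_power2_gt_zero_iff)
      then show ?thesis using ws wws by simp
    qed
    moreover have "0 \<le> (\<Sum>w\<leftarrow>ws'. Im w * nv (1/(t-w)))"
      using ws wws by (intro sum_list_nonneg) (auto simp: nv_def)
    ultimately show ?thesis using wws by simp
  qed
  have cs: "real n * nv u \<le> (\<Sum>w\<leftarrow>ws. nv (1/(t-w)))"
    using cs_aux[of "map (\<lambda>w. 1/(t-w)) ws" n u] Su len unfolding S_def nv_def
    by (simp add: comp_def)
  have "Im S = real n * Im u" using Su by simp
  also have "\<dots> \<le> real n * (- Im t * nv u)"
  proof -
    have "0 \<le> nv u" by (simp add: nv_def)
    then have "Im b * nv u \<le> 0" using b by (simp add: mult_nonpos_nonneg)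
    then have "Im u \<le> - Im t * nv u" using Imu by (simp add: algebra_simps)
    then show ?thesis by (intro mult_left_mono) auto
  qed
  also have "\<dots> = - Im t * (real n * nv u)" by simp
  also have "\<dots> \<le> - Im t * (\<Sum>w\<leftarrow>ws. nv (1/(t-w)))"
    using cs t by (intro mult_left_mono) auto
  also have "\<dots> < (\<Sum>w\<leftarrow>ws. Im w * nv (1/(t-w))) + - Im t * (\<Sum>w\<leftarrow>ws. nv (1/(t-w)))"
    using pos by simp
  also have "\<dots> = Im S"
    unfolding ImS by (simp add: sum_list_const_mult[symmetric] sum_list_addf[symmetric] algebra_simps)
  finally show False by simp
qed

lemma log_deriv_prod:
  fixes ws :: "complex list"
  assumes "t \<notin> set ws"
  shows "poly (pderiv (\<Prod>w\<leftarrow>ws. [:-w, 1:])) t = poly (\<Prod>w\<leftarrow>ws. [:-w, 1:]) t * (\<Sum>w\<leftarrow>ws. 1 / (t - w))"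
  using assms
proof (induction ws)
  case Nil then show ?case by simp
next
  case (Cons a ws)
  let ?P = "\<Prod>w\<leftarrow>ws. [:-w, 1:]"
  have ta: "t - a \<noteq> 0" using Cons by auto
  have "pderiv ([:-a, 1:] * ?P) = [:-a, 1:] * pderiv ?P + ?P"
    by (subst pderiv_mult) (simp add: pderiv_pCons)
  then have "poly (pderiv (\<Prod>w\<leftarrow>a#ws. [:-w, 1:])) t = poly ([:-a, 1:] * pderiv ?P + ?P) t"
    by (simp only: prod_list.Cons list.map)
  also have "\<dots> = (t - a) * poly (pderiv ?P) t + poly ?P t"
    by (simp add: algebra_simps)
  also have "\<dots> = (t - a) * (poly ?P t * (\<Sum>w\<leftarrow>ws. 1 / (t - w))) + poly ?P t"
    using Cons by simp
  also have "\<dots> = poly (\<Prod>w\<leftarrow>a#ws. [:-w, 1:]) t * (\<Sum>w\<leftarrow>a#ws. 1 / (t - w))"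
    using ta by (simp add: field_simps)
  finally show ?case .
qed

lemma laguerre:
  fixes f :: "complex poly"
  assumes deg: "degree f \<le> n" and n: "1 \<le> n" and nz: "\<forall>t. Im t \<le> 0 \<longrightarrow> poly f t \<noteq> 0"
    and b: "Im b \<le> 0" and t: "Im t \<le> 0"
  shows "of_nat n * poly f t + (b - t) * poly (pderiv f) t \<noteq> 0"
proof -
  have f0: "f \<noteq> 0" using nz by (metis order_refl poly_0 zero_complex.sel(2))
  obtain ws where ws: "mset ws = proots f" using ex_mset by blast
  have dec: "f = smult (lead_coeff f) (\<Prod>w\<leftarrow>ws. [:-w, 1:])"
    using complex_poly_decompose_multiset[of f]
    by (metis prod_mset_prod_list ws mset_map)
  have len: "length ws = degree f" using ws size_proots_complex[of f] by (metis size_mset)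
  have roots: "0 < Im w" if "w \<in> set ws" for w
  proof -
    have "w \<in># proots f" using that ws by (metis set_mset_mset)
    then have "poly f w = 0" using f0 by simp
    then show ?thesis using nz by force
  qed
  have tn: "t \<notin> set ws" using roots t by force
  let ?P = "\<Prod>w\<leftarrow>ws. [:-w, 1:]"
  have "poly ?P t \<noteq> 0" using tn by (induction ws) auto
  moreover have "lead_coeff f \<noteq> 0" using f0 by simp
  moreover have "of_nat n + (b - t) * (\<Sum>w\<leftarrow>ws. 1 / (t - w)) \<noteq> 0"
    using laguerre_ineq[OF t b _ _ n, of ws] roots len deg by auto
  ultimately have "lead_coeff f * poly ?P t * (of_nat n + (b - t) * (\<Sum>w\<leftarrow>ws. 1 / (t - w))) \<noteq> 0"
    by simp
  also have "lead_coeff f * poly ?P t * (of_nat n + (b - t) * (\<Sum>w\<leftarrow>ws. 1 / (t - w)))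
     = of_nat n * poly f t + (b - t) * poly (pderiv f) t"
    by (subst (1 2) dec) (simp add: pderiv_smult log_deriv_prod[OF tn] algebra_simps)
  finally show ?thesis .
qed


lemma pderiv_sum': "pderiv (\<Sum>k\<in>A. f k) = (\<Sum>k\<in>A. pderiv (f k))"
  by (induction A rule: infinite_finite_induct) (auto simp: pderiv_add)

definition FF :: "(nat \<Rightarrow> 'a::comm_ring_1) \<Rightarrow> nat \<Rightarrow> 'a list \<Rightarrow> 'a" where
  "FF c N L = (\<Sum>k\<le>N. c k * esym L k)"

lemma FF_bound:
  assumes "length L \<le> N" "N \<le> N'"
  shows "FF c N' L = FF c N L"
  unfolding FF_def
  by (rule sum.mono_neutral_right[of "{..N'}" "{..N}"]) (use assms in \<open>auto simp: esym_gt\<close>)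

lemma FF_cons:
  assumes "length (x # L) \<le> N"
  shows "FF c N (x # L) = FF c N L + x * FF (\<lambda>k. c (Suc k)) N L"
proof -
  obtain M where N: "N = Suc M" using assms by (cases N) auto
  have LM: "length L \<le> M" using assms N by simp
  have "FF c N (x # L) = c 0 + (\<Sum>j\<le>M. c (Suc j) * (esym L (Suc j) + x * esym L j))"
    unfolding FF_def N sum.atMost_Suc_shift by simp
  also have "\<dots> = (c 0 + (\<Sum>j\<le>M. c (Suc j) * esym L (Suc j))) + x * (\<Sum>j\<le>M. c (Suc j) * esym L j)"
    by (simp add: algebra_simps sum.distrib sum_distrib_left)
  also have "c 0 + (\<Sum>j\<le>M. c (Suc j) * esym L (Suc j)) = FF c N L"
    unfolding FF_def N sum.atMost_Suc_shift by simp
  also have "(\<Sum>j\<le>M. c (Suc j) * esym L j) = FF (\<lambda>k. c (Suc k)) N L"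
    unfolding FF_def N using LM by (simp add: esym_gt)
  finally show ?thesis .
qed

lemma FF_rep: "FF c n (replicate n t) = (\<Sum>k\<le>n. c k * of_nat (n choose k) * t ^ k)"
  unfolding FF_def esym_replicate by (simp add: mult.assoc)

lemma FF_lin: "FF (\<lambda>k. c k + b * c' k) N L = FF c N L + b * FF c' N L"
  unfolding FF_def by (simp add: algebra_simps sum.distrib sum_distrib_left)

lemma gws:
  fixes L :: "complex list"
  shows "(\<forall>t. Im t \<le> 0 \<longrightarrow> FF c (length L) (replicate (length L) t) \<noteq> 0) \<Longrightarrow>
         (\<forall>b\<in>set L. Im b \<le> 0) \<Longrightarrow> FF c (length L) L \<noteq> 0"
proof (induction L arbitrary: c)
  case Nil
  then show ?case by (metis list.size(3) replicate_0 zero_complex.sel(2) order_refl)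
next
  case (Cons b L)
  define n where "n = length L"
  define sc where "sc = (\<lambda>k. c (Suc k))"
  have key: "FF c (Suc n) (x # L') = FF c n L' + x * FF sc n L'" if "length L' = n" for x L'
    using that FF_cons[of x L' "Suc n" c] FF_bound[of L' n "Suc n"] unfolding sc_def by simp
  define c2 where "c2 = (\<lambda>k. c k + b * sc k)"
  have lhs: "FF c (length (b # L)) (b # L) = FF c2 n L"
    using key[of L b] unfolding c2_def FF_lin by (simp add: n_def)
  have hyp: "FF c2 n (replicate n t) \<noteq> 0" if t: "Im t \<le> 0" for t
  proof -
    define G where "G = FF sc n (replicate n t)"
    define f where "f = FF c (Suc n) (replicate (Suc n) t)"
    have f_eq: "f = FF c n (replicate n t) + t * G"
      unfolding f_def G_def using key[of "replicate n t" t] by simp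
    have eq2: "FF c2 n (replicate n t) = f + (b - t) * G"
      unfolding c2_def FF_lin f_eq G_def by (simp add: algebra_simps)
    define fp where "fp = (\<Sum>k\<le>Suc n. monom (c k * of_nat (Suc n choose k)) k)"
    have pf: "poly fp s = FF c (Suc n) (replicate (Suc n) s)" for s
      unfolding fp_def FF_rep by (simp add: poly_sum poly_monom)
    have G_eq: "G = (\<Sum>j\<le>n. c (Suc j) * of_nat (n choose j) * t ^ j)"
      unfolding G_def FF_rep sc_def ..
    have pd: "poly (pderiv fp) t = of_nat (Suc n) * G"
    proof -
      have "poly (pderiv fp) t = (\<Sum>k\<le>Suc n. of_nat k * (c k * of_nat (Suc n choose k)) * t ^ (k - 1))"
        unfolding fp_def pderiv_sum' poly_sum pderiv_monom poly_monom ..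
      also have "\<dots> = (\<Sum>j\<le>n. of_nat (Suc j) * (c (Suc j) * of_nat (Suc n choose Suc j)) * t ^ j)"
        by (subst sum.atMost_Suc_shift) simp
      also have "\<dots> = (\<Sum>j\<le>n. of_nat (Suc n) * (c (Suc j) * of_nat (n choose j) * t ^ j))"
      proof (intro sum.cong refl)
        fix j
        have "(of_nat (Suc j) :: complex) * of_nat (Suc n choose Suc j) = of_nat (Suc n) * of_nat (n choose j)"
          by (metis Suc_times_binomial of_nat_mult)
        then show "of_nat (Suc j) * (c (Suc j) * of_nat (Suc n choose Suc j)) * t ^ j
           = of_nat (Suc n) * (c (Suc j) * of_nat (n choose j) * t ^ j)"
          by (metis (no_types, lifting) mult.assoc mult.left_commute)
      qed
      also have "\<dots> = of_nat (Suc n) * G" unfolding G_eq by (simp add: sum_distrib_left)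
      finally show ?thesis .
    qed
    have degfp: "degree fp \<le> Suc n"
      unfolding fp_def by (intro degree_sum_le) (auto intro: order.trans[OF degree_monom_le])
    have nzfp: "\<forall>s. Im s \<le> 0 \<longrightarrow> poly fp s \<noteq> 0"
      using Cons.prems(1) unfolding pf by (simp add: n_def)
    have "of_nat (Suc n) * poly fp t + (b - t) * poly (pderiv fp) t \<noteq> 0"
      by (rule laguerre[OF degfp _ nzfp _ t]) (use Cons.prems(2) in auto)
    then have "of_nat (Suc n) * (f + (b - t) * G) \<noteq> 0"
      unfolding pd pf f_def[symmetric] by (simp add: algebra_simps)
    then show ?thesis unfolding eq2 by simp
  qed
  have "FF c2 (length L) L \<noteq> 0"
    by (rule Cons.IH) (use hyp Cons.prems(2) in \<open>auto simp: n_def\<close>)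
  then show ?case using lhs by (simp add: n_def)
qed


definition cev :: "real poly \<Rightarrow> complex \<Rightarrow> complex" where
  "cev P z = poly (map_poly of_real P) z"

lemma cev_pCons: "cev (pCons a p) z = of_real a + z * cev p z"
  unfolding cev_def by (simp add: map_poly_pCons)

lemma cev_0[simp]: "cev 0 z = 0" unfolding cev_def by simp

lemma cev_add: "cev (p + q) z = cev p z + cev q z"
proof (induction p arbitrary: q rule: pCons_induct)
  case 0 then show ?case by simp
next
  case (pCons a p)
  then show ?case by (cases q) (auto simp: cev_pCons algebra_simps)
qed

lemma cev_smult: "cev (smult a p) z = of_real a * cev p z"
  by (induction p rule: pCons_induct) (auto simp: cev_pCons algebra_simps)

lemma cev_mult: "cev (p * q) z = cev p z * cev q z"
  by (induction p rule: pCons_induct) (auto simp: cev_pCons cev_add cev_smult algebra_simps)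

lemma cev_const[simp]: "cev [:a:] z = of_real a"
  using cev_pCons[of a 0 z] by simp

lemma cev_1[simp]: "cev 1 z = 1"
  by (simp add: one_pCons)

lemma cev_lin: "cev [:-x, 1:] z = z - of_real x"
  by (simp add: cev_pCons)

lemma cev_prod: "cev (\<Prod>x\<leftarrow>xs. [:-x, 1:]) z = (\<Prod>x\<leftarrow>xs. z - of_real x)"
  by (induction xs) (auto simp: cev_mult cev_lin simp del: mult_pCons_left)

lemma cev_of_real: "cev p (of_real x) = of_real (poly p x)"
  by (induction p rule: pCons_induct) (auto simp: cev_pCons)

lemma cev_cnj: "cev p (cnj z) = cnj (cev p z)"
  by (induction p rule: pCons_induct) (auto simp: cev_pCons)

lemma cev_sum: "cev (\<Sum>k\<in>A. f k) z = (\<Sum>k\<in>A. cev (f k) z)"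
  by (induction A rule: infinite_finite_induct) (auto simp: cev_add)

lemma cev_monom: "cev (monom a n) z = of_real a * z ^ n"
  unfolding cev_def by (simp add: poly_monom map_poly_monom)

lemma degree_cev: "degree (map_poly (of_real :: real \<Rightarrow> complex) p) = degree p"
  by (rule degree_map_poly) simp

lemma realrooted_Pd:
  fixes P :: "real poly"
  assumes "degree P \<le> d" "coeff P d = 1" "\<forall>z. cev P z = 0 \<longrightarrow> Im z = 0"
  shows "\<exists>xs. length xs = d \<and> P = (\<Prod>x\<leftarrow>xs. [:-x, 1:])"
  using assms
proof (induction d arbitrary: P)
  case 0
  then have "P = [:1:]" by (metis coeff_pCons_0 degree_0_id le_zero_eq)
  then show ?case by (intro exI[of _ "[]"]) simp
next
  case (Suc d)
  have degP: "degree P = Suc d"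
    using Suc.prems(1,2) by (metis le_antisym le_degree zero_neq_one)
  then have "\<not> constant (poly (map_poly (of_real :: real \<Rightarrow> complex) P))"
    by (simp add: constant_degree degree_cev)
  then obtain z where z: "cev P z = 0" unfolding cev_def using fundamental_theorem_of_algebra by blast
  then have "Im z = 0" using Suc.prems(3) by blast
  then have zx: "z = of_real (Re z)" by (simp add: complex_eq_iff)
  define x where "x = Re z"
  have "poly P x = 0" using z zx cev_of_real[of P x] unfolding x_def by simp
  then obtain Q where PQ: "P = [:-x, 1:] * Q" by (metis dvdE poly_eq_0_iff_dvd)
  have Q0: "Q \<noteq> 0" using PQ degP by auto
  have "degree P = degree [:-x, 1:] + degree Q" unfolding PQ using Q0
    by (intro degree_mult_eq) auto
  then have degQ: "degree Q = d" using degP by simp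
  have cQ: "coeff Q d = 1"
  proof -
    have "coeff P (Suc d) = coeff Q d"
      using PQ degQ by (simp add: coeff_mult_degree_sum[symmetric] )
        (metis add.commute coeff_pCons_Suc coeff_pCons_0 mult_pCons_left coeff_add coeff_smult
           coeff_eq_0 lessI mult_zero_left add_0 plus_1_eq_Suc)
    then show ?thesis using Suc.prems(2) by simp
  qed
  have rQ: "\<forall>z. cev Q z = 0 \<longrightarrow> Im z = 0"
    using Suc.prems(3) PQ by (auto simp: cev_mult simp del: mult_pCons_left)
  obtain xs where "length xs = d" "Q = (\<Prod>x\<leftarrow>xs. [:-x, 1:])"
    using Suc.IH[OF _ cQ rQ] degQ by auto
  then show ?case using PQ by (intro exI[of _ "x # xs"]) simp
qed


lemma frame_nz:
  assumes diag: "\<forall>z t. 0 < Im z \<longrightarrow> Im t \<le> 0 \<longrightarrow> FF (c z) d (replicate d t) \<noteq> 0"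
    and z: "0 < Im z" and L: "\<forall>b\<in>set L. Im b \<le> 0" "length L = d"
  shows "FF (c z) d L \<noteq> 0"
  using gws[of "c z" L] diag z L by auto

lemma frame_R:
  fixes T :: "real poly \<Rightarrow> real poly" and c :: "complex \<Rightarrow> nat \<Rightarrow> complex"
  assumes monic: "\<forall>as. length as = d \<longrightarrow> degree (T (\<Prod>x\<leftarrow>as. [:-x, 1:])) \<le> d \<and> coeff (T (\<Prod>x\<leftarrow>as. [:-x, 1:])) d = 1"
    and eval: "\<forall>as z. length as = d \<longrightarrow> cev (T (\<Prod>x\<leftarrow>as. [:-x, 1:])) z = FF (c z) d (map of_real as)"
    and diag: "\<forall>z t. 0 < Im z \<longrightarrow> Im t \<le> 0 \<longrightarrow> FF (c z) d (replicate d t) \<noteq> 0"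
    and len: "length as = d"
  shows "\<exists>xs. length xs = d \<and> T (\<Prod>x\<leftarrow>as. [:-x, 1:]) = (\<Prod>x\<leftarrow>xs. [:-x, 1:])"
proof (rule realrooted_Pd)
  let ?P = "T (\<Prod>x\<leftarrow>as. [:-x, 1:])"
  show "degree ?P \<le> d" "coeff ?P d = 1" using monic len by auto
  have nz: "cev ?P z \<noteq> 0" if "0 < Im z" for z
    using frame_nz[OF diag that, of "map of_real as"] eval len by auto
  show "\<forall>z. cev ?P z = 0 \<longrightarrow> Im z = 0"
  proof (intro allI impI)
    fix z assume z: "cev ?P z = 0"
    show "Im z = 0"
    proof (rule ccontr)
      assume "Im z \<noteq> 0"
      then consider "0 < Im z" | "0 < Im (cnj z)" by force
      then show False
      proof cases
        case 1 then show ?thesis using nz z by blast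
      next
        case 2 then show ?thesis using nz[OF 2] z by (simp add: cev_cnj)
      qed
    qed
  qed
qed

lemma im_pencil:
  fixes e a :: complex and \<alpha> \<beta> :: real
  shows "Im ((e + of_real \<beta> * a) * cnj (e + of_real \<alpha> * a)) = (\<alpha> - \<beta>) * Im (e * cnj a)"
  by (simp add: algebra_simps)

lemma frame_S:
  fixes T :: "real poly \<Rightarrow> real poly" and c :: "complex \<Rightarrow> nat \<Rightarrow> complex"
  assumes eval: "\<forall>as z. length as = d \<longrightarrow> cev (T (\<Prod>x\<leftarrow>as. [:-x, 1:])) z = FF (c z) d (map of_real as)"
    and diag: "\<forall>z t. 0 < Im z \<longrightarrow> Im t \<le> 0 \<longrightarrow> FF (c z) d (replicate d t) \<noteq> 0"
    and len: "length ss + 1 = d" and ab: "\<alpha> \<le> \<beta>" and z: "0 < Im z"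
  shows "0 \<le> Im (cev (T (\<Prod>x\<leftarrow>\<beta>#ss. [:-x, 1:])) z * cnj (cev (T (\<Prod>x\<leftarrow>\<alpha>#ss. [:-x, 1:])) z))"
proof (rule ccontr)
  let ?L = "map complex_of_real ss"
  define e where "e = FF (c z) d ?L"
  define a where "a = FF (\<lambda>k. c z (Suc k)) d ?L"
  have cons: "FF (c z) d (g # ?L) = e + g * a" for g
    unfolding e_def a_def by (rule FF_cons) (use len in simp)
  have P: "cev (T (\<Prod>x\<leftarrow>\<alpha>#ss. [:-x, 1:])) z = e + of_real \<alpha> * a"
    using eval[rule_format, of "\<alpha> # ss" z] len cons[of "of_real \<alpha>"] by simp
  have Q: "cev (T (\<Prod>x\<leftarrow>\<beta>#ss. [:-x, 1:])) z = e + of_real \<beta> * a"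
    using eval[rule_format, of "\<beta> # ss" z] len cons[of "of_real \<beta>"] by simp
  assume "\<not> 0 \<le> Im (cev (T (\<Prod>x\<leftarrow>\<beta>#ss. [:-x, 1:])) z * cnj (cev (T (\<Prod>x\<leftarrow>\<alpha>#ss. [:-x, 1:])) z))"
  then have neg: "(\<alpha> - \<beta>) * Im (e * cnj a) < 0" unfolding P Q im_pencil by simp
  then have pos: "0 < Im (e * cnj a)" using ab
    by (smt (verit, best) mult_nonpos_nonpos)
  then have a0: "a \<noteq> 0" by auto
  define g where "g = - e / a"
  have Nz: "0 < Re a ^ 2 + Im a ^ 2" using a0
    by (simp add: complex_eq_iff add_pos_nonneg sum_power2_gt_zero_iff)
  have "Im g = - Im (e * cnj a) / (Re a ^ 2 + Im a ^ 2)"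
    unfolding g_def by (simp add: Im_divide power2_eq_square algebra_simps diff_divide_distrib)
  then have gneg: "Im g \<le> 0" using pos Nz by (simp add: divide_nonpos_pos)
  have "FF (c z) d (g # ?L) = 0" using cons[of g] a0 unfolding g_def by simp
  moreover have "FF (c z) d (g # ?L) \<noteq> 0"
    by (rule frame_nz[OF diag z]) (use gneg len in auto)
  ultimately show False by simp
qed


definition rho :: "real list \<Rightarrow> real \<Rightarrow> nat" where
  "rho L x = length (filter (\<lambda>y. x < y) L)"

lemma rho_step:
  assumes "x < u" "\<forall>y\<in>set L. x < y \<longrightarrow> u \<le> y"
  shows "rho L x = rho L u + count_list L u"
  using assms unfolding rho_def by (induction L) auto

lemma rho_remove1:
  assumes "u \<in> set L"
  shows "rho L x = rho (remove1 u L) x + (if x < u then 1 else 0)"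
  using assms unfolding rho_def by (induction L) auto

lemma parity_interlace:
  fixes xs ys :: "real list"
  assumes disj: "set xs \<inter> set ys = {}"
    and px: "\<forall>u\<in>set xs. count_list xs u = 1 \<and> odd (rho ys u + rho xs u)"
    and py: "\<forall>v\<in>set ys. count_list ys v = 1 \<and> even (rho ys v + rho xs v)"
  shows "rho xs x \<le> rho ys x \<and> rho ys x \<le> rho xs x + 1"
proof (induction "card {r \<in> set xs \<union> set ys. x < r}" arbitrary: x rule: less_induct)
  case less
  define A where "A = {r \<in> set xs \<union> set ys. x < r}"
  have finA: "finite A" unfolding A_def by auto
  show ?case
  proof (cases "A = {}")
    case True
    then have "rho xs x = 0" "rho ys x = 0" unfolding A_def rho_def by (auto simp: filter_empty_conv)
    then show ?thesis by simp
  next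
    case False
    define u where "u = Min A"
    have uA: "u \<in> A" unfolding u_def using False finA by simp
    have umin: "\<forall>r\<in>A. u \<le> r" unfolding u_def using finA by simp
    have xu: "x < u" using uA unfolding A_def by simp
    have sub: "{r \<in> set xs \<union> set ys. u < r} \<subset> A" using uA xu unfolding A_def by auto
    have IH: "rho xs u \<le> rho ys u \<and> rho ys u \<le> rho xs u + 1"
      by (rule less.hyps) (use psubset_card_mono[OF finA sub] in \<open>simp add: A_def\<close>)
    have sx: "rho xs x = rho xs u + count_list xs u"
      by (rule rho_step[OF xu]) (use umin in \<open>auto simp: A_def\<close>)
    have sy: "rho ys x = rho ys u + count_list ys u"
      by (rule rho_step[OF xu]) (use umin in \<open>auto simp: A_def\<close>)
    from uA consider "u \<in> set xs" | "u \<in> set ys" unfolding A_def by auto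
    then show ?thesis
    proof cases
      case 1
      then have "count_list xs u = 1" "count_list ys u = 0" "odd (rho ys u + rho xs u)"
        using px disj by (auto simp: count_list_0_iff)
      then show ?thesis using IH sx sy by presburger
    next
      case 2
      then have "count_list ys u = 1" "count_list xs u = 0" "even (rho ys u + rho xs u)"
        using py disj by (auto simp: count_list_0_iff)
      then show ?thesis using IH sx sy by presburger
    qed
  qed
qed

lemma prod_split_count:
  fixes f :: "'a \<Rightarrow> 'b::comm_monoid_mult"
  shows "prod_list (map f xs) = f u ^ count_list xs u * prod_list (map f (filter (\<lambda>x. x \<noteq> u) xs))"
  by (induction xs) (auto simp: algebra_simps)

lemma prod_remove1:
  fixes f :: "'a \<Rightarrow> 'b::comm_monoid_mult"
  shows "u \<in> set xs \<Longrightarrow> prod_list (map f xs) = f u * prod_list (map f (remove1 u xs))"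
  by (induction xs) (auto simp: algebra_simps)

lemma sign_prod:
  fixes L :: "real list"
  shows "u \<notin> set L \<Longrightarrow> 0 < (\<Prod>y\<leftarrow>L. u - y) * (-1) ^ rho L u"
proof (induction L)
  case Nil then show ?case by (simp add: rho_def)
next
  case (Cons a L)
  then have IH: "0 < (\<Prod>y\<leftarrow>L. u - y) * (-1) ^ rho L u" and au: "a \<noteq> u" by auto
  show ?case
  proof (cases "u < a")
    case True
    then have "rho (a # L) u = Suc (rho L u)" by (simp add: rho_def)
    then have e: "(-1::real) ^ rho (a # L) u = - ((-1) ^ rho L u)" by simp
    have "(\<Prod>y\<leftarrow>a#L. u - y) * (-1) ^ rho (a#L) u = (a - u) * ((\<Prod>y\<leftarrow>L. u - y) * (-1) ^ rho L u)"
      unfolding e by (simp add: algebra_simps)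
    also have "0 < \<dots>" using IH True by (subst mult_pos_pos) auto
    finally show ?thesis .
  next
    case False
    then have "rho (a # L) u = rho L u" by (simp add: rho_def)
    then have e: "(-1::real) ^ rho (a # L) u = (-1) ^ rho L u" by simp
    have "(\<Prod>y\<leftarrow>a#L. u - y) * (-1) ^ rho (a#L) u = (u - a) * ((\<Prod>y\<leftarrow>L. u - y) * (-1) ^ rho L u)"
      unfolding e by (simp add: algebra_simps)
    also have "0 < \<dots>" using IH False au by (subst mult_pos_pos) auto
    finally show ?thesis .
  qed
qed

lemma poly_prod_lin: "poly (\<Prod>x\<leftarrow>L. [:-x, 1:]) (u::real) = (\<Prod>x\<leftarrow>L. u - x)"
proof (induction L)
  case Nil then show ?case by simp
next
  case (Cons a L)
  have "poly (\<Prod>x\<leftarrow>a#L. [:-x, 1:]) u = poly [:-a, 1:] u * poly (\<Prod>x\<leftarrow>L. [:-x, 1:]) u"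
    by (simp only: list.map prod_list.Cons poly_mult)
  moreover have p1: "poly [:-a, 1:] u = u - a" by (simp add: algebra_simps)
  ultimately show ?case by (simp only: p1 Cons.IH list.map prod_list.Cons)
qed

lemma local_root:
  fixes H :: "complex \<Rightarrow> complex" and u r s :: real and m :: nat
  assumes cont: "isCont H (of_real u)" and Hu: "H (of_real u) = of_real r" and r: "r \<noteq> 0"
    and s: "s \<noteq> 0" and m: "1 \<le> m"
    and stab: "\<forall>z. 0 < Im z \<longrightarrow> 0 \<le> s * Im ((z - of_real u) ^ m * H z)"
  shows "m = 1 \<and> 0 < s * r"
proof -
  have key: "0 \<le> s * r * Im (\<zeta> ^ m)" if \<zeta>: "0 < Im \<zeta>" for \<zeta>
  proof -
    define g where "g = (\<lambda>\<epsilon>::real. s * Im (\<zeta> ^ m * H (of_real u + of_real \<epsilon> * \<zeta>)))"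
    have lim1: "((\<lambda>\<epsilon>::real. of_real u + of_real \<epsilon> * \<zeta>) \<longlongrightarrow> of_real u) (at_right 0)"
      by (auto intro!: tendsto_eq_intros)
    have "((\<lambda>\<epsilon>::real. H (of_real u + of_real \<epsilon> * \<zeta>)) \<longlongrightarrow> H (of_real u)) (at_right 0)"
      by (rule isCont_tendsto_compose[OF cont lim1])
    then have lim: "(g \<longlongrightarrow> s * Im (\<zeta> ^ m * H (of_real u))) (at_right 0)"
      unfolding g_def by (auto intro!: tendsto_intros)
    have ev: "\<forall>\<^sub>F \<epsilon> in at_right 0. 0 \<le> g \<epsilon>"
    proof (rule eventually_at_rightI[of 0 1])
      fix \<epsilon> :: real assume "\<epsilon> \<in> {0<..<1}"
      then have e: "0 < \<epsilon>" by simp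
      define z where "z = of_real u + of_real \<epsilon> * \<zeta>"
      have "0 < Im z" unfolding z_def using e \<zeta> by simp
      then have "0 \<le> s * Im ((z - of_real u) ^ m * H z)" using stab by blast
      also have "(z - of_real u) ^ m * H z = of_real (\<epsilon> ^ m) * (\<zeta> ^ m * H z)"
        unfolding z_def by (simp add: power_mult_distrib)
      finally have "0 \<le> \<epsilon> ^ m * g \<epsilon>" unfolding g_def z_def by (simp add: algebra_simps)
      moreover have "0 < \<epsilon> ^ m" using e by simp
      ultimately show "0 \<le> g \<epsilon>" by (simp add: zero_le_mult_iff)
    qed simp
    have "0 \<le> s * Im (\<zeta> ^ m * H (of_real u))"
      by (rule tendsto_lowerbound[OF lim ev]) simp
    then show ?thesis using Hu by (simp add: algebra_simps)
  qed
  have sr: "s * r \<noteq> 0" using s r by simp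
  have m1: "m = 1"
  proof (rule ccontr)
    assume "m \<noteq> 1"
    then have m2: "2 \<le> m" using m by simp
    have a1: "0 < Im (cis (pi / (2 * real m)))"
      using m2 by simp (rule sin_gt_zero, auto simp: field_simps)
    have a2: "0 < Im (cis (3 * pi / (2 * real m)))"
    proof -
      have "3 * pi / (2 * real m) \<le> 3 * pi / 4" using m2 by (intro divide_left_mono) auto
      then have "3 * pi / (2 * real m) < pi" using pi_gt_zero by linarith
      then show ?thesis using m2 by (simp add: sin_gt_zero)
    qed
    have "Im (cis (pi / (2 * real m)) ^ m) = 1"
      using m2 by (simp add: DeMoivre)
    moreover have "Im (cis (3 * pi / (2 * real m)) ^ m) = -1"
    proof -
      have "real m * (3 * pi / (2 * real m)) = 3 * pi / 2" using m2 by simp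
      moreover have "sin (3 * pi / 2) = -1"
        using sin_periodic_pi[of "pi / 2"] by (simp add: algebra_simps)
      ultimately show ?thesis using m2 by (simp add: DeMoivre)
    qed
    ultimately show False using key[OF a1] key[OF a2] sr by simp
  qed
  moreover have "0 \<le> s * r" using key[of \<i>] m1 by simp
  ultimately show ?thesis using sr by (auto simp: order_less_le)
qed


lemma Im_cnj': "Im (cnj w) = - Im w" by simp

lemma neg_pow_odd: "(-1::real) ^ n < 0 \<Longrightarrow> odd n"
  by (cases "even n") auto

lemma neg_pow_even: "0 < (-1::real) ^ n \<Longrightarrow> even n"
  by (cases "even n") auto

lemma rho_filter_ne: "rho (filter (\<lambda>x. x \<noteq> u) L) u = rho L u"
  unfolding rho_def by (induction L) auto

lemma isCont_cev: "isCont (cev p) z"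
  unfolding cev_def by simp

lemma mult_cnj_scale:
  fixes w A B :: complex
  shows "Im ((w * B) * cnj (w * A)) = (cmod w)^2 * Im (B * cnj A)"
proof -
  have "(w * B) * cnj (w * A) = (w * cnj w) * (B * cnj A)" by (simp add: algebra_simps)
  also have "w * cnj w = of_real ((cmod w)^2)" using complex_norm_square[of w] by simp
  finally have eq: "(w * B) * cnj (w * A) = of_real ((cmod w)^2) * (B * cnj A)" .
  show ?thesis unfolding eq by simp
qed

lemma root_info_x:
  fixes xs ys :: "real list"
  assumes u: "u \<in> set xs" "u \<notin> set ys"
    and stab: "\<forall>z. 0 < Im z \<longrightarrow> 0 \<le> Im ((\<Prod>y\<leftarrow>ys. z - of_real y) * cnj (\<Prod>x\<leftarrow>xs. z - of_real x))"
  shows "count_list xs u = 1 \<and> odd (rho ys u + rho xs u)"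
proof -
  define m where "m = count_list xs u"
  have m: "1 \<le> m" using u unfolding m_def by (metis Suc_leI count_list_0_iff neq0_conv One_nat_def)
  define xs1 where "xs1 = filter (\<lambda>x. x \<noteq> u) xs"
  define H where "H = (\<lambda>z. cnj (cev (\<Prod>y\<leftarrow>ys. [:-y, 1:]) z) * cev (\<Prod>x\<leftarrow>xs1. [:-x, 1:]) z)"
  define r where "r = poly (\<Prod>y\<leftarrow>ys. [:-y, 1:]) u * poly (\<Prod>x\<leftarrow>xs1. [:-x, 1:]) u"
  have cont: "isCont H (of_real u)" unfolding H_def
    by (intro continuous_intros isCont_cev)
  have Hu: "H (of_real u) = of_real r" unfolding H_def r_def by (simp add: cev_of_real)
  have u1: "u \<notin> set xs1" unfolding xs1_def by simp
  have r0: "r \<noteq> 0" unfolding r_def poly_prod_lin using u(2) u1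
    by (auto simp: prod_list_zero_iff)
  have st: "\<forall>z. 0 < Im z \<longrightarrow> 0 \<le> (-1) * Im ((z - of_real u) ^ m * H z)"
  proof (intro allI impI)
    fix z :: complex assume z: "0 < Im z"
    have "(\<Prod>x\<leftarrow>xs. z - of_real x) = (z - of_real u) ^ m * (\<Prod>x\<leftarrow>xs1. z - of_real x)"
      unfolding m_def xs1_def by (rule prod_split_count)
    then have eqn: "(\<Prod>y\<leftarrow>ys. z - of_real y) * cnj (\<Prod>x\<leftarrow>xs. z - of_real x) = cnj ((z - of_real u) ^ m * H z)"
      unfolding H_def cev_prod by simp
    have "0 \<le> Im ((\<Prod>y\<leftarrow>ys. z - of_real y) * cnj (\<Prod>x\<leftarrow>xs. z - of_real x))" using stab z by blast
    then have "0 \<le> Im (cnj ((z - of_real u) ^ m * H z))" unfolding eqn .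
    then show "0 \<le> (-1) * Im ((z - of_real u) ^ m * H z)" unfolding Im_cnj' by simp
  qed
  have lr: "m = 1 \<and> 0 < (-1) * r" by (rule local_root[OF cont Hu r0 _ m st]) simp
  have s1: "0 < poly (\<Prod>y\<leftarrow>ys. [:-y, 1:]) u * (-1) ^ rho ys u"
    unfolding poly_prod_lin by (rule sign_prod[OF u(2)])
  have s2: "0 < poly (\<Prod>x\<leftarrow>xs1. [:-x, 1:]) u * (-1) ^ rho xs u"
    unfolding poly_prod_lin using sign_prod[OF u1] by (simp add: xs1_def rho_filter_ne)
  have "0 < (poly (\<Prod>y\<leftarrow>ys. [:-y, 1:]) u * (-1) ^ rho ys u) * (poly (\<Prod>x\<leftarrow>xs1. [:-x, 1:]) u * (-1) ^ rho xs u)"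
    using s1 s2 by simp
  also have "\<dots> = r * (-1) ^ (rho ys u + rho xs u)" unfolding r_def by (simp add: power_add algebra_simps)
  finally have "(-1::real) ^ (rho ys u + rho xs u) < 0" using lr by (simp add: zero_less_mult_iff)
  then have "odd (rho ys u + rho xs u)" by (rule neg_pow_odd)
  then show ?thesis using lr m_def by simp
qed

lemma root_info_y:
  fixes xs ys :: "real list"
  assumes v: "v \<in> set ys" "v \<notin> set xs"
    and stab: "\<forall>z. 0 < Im z \<longrightarrow> 0 \<le> Im ((\<Prod>y\<leftarrow>ys. z - of_real y) * cnj (\<Prod>x\<leftarrow>xs. z - of_real x))"
  shows "count_list ys v = 1 \<and> even (rho ys v + rho xs v)"
proof -
  define m where "m = count_list ys v"
  have m: "1 \<le> m" using v unfolding m_def by (metis Suc_leI count_list_0_iff neq0_conv One_nat_def)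
  define ys1 where "ys1 = filter (\<lambda>x. x \<noteq> v) ys"
  define H where "H = (\<lambda>z. cev (\<Prod>y\<leftarrow>ys1. [:-y, 1:]) z * cnj (cev (\<Prod>x\<leftarrow>xs. [:-x, 1:]) z))"
  define r where "r = poly (\<Prod>y\<leftarrow>ys1. [:-y, 1:]) v * poly (\<Prod>x\<leftarrow>xs. [:-x, 1:]) v"
  have cont: "isCont H (of_real v)" unfolding H_def
    by (intro continuous_intros isCont_cev)
  have Hv: "H (of_real v) = of_real r" unfolding H_def r_def by (simp add: cev_of_real)
  have v1: "v \<notin> set ys1" unfolding ys1_def by simp
  have r0: "r \<noteq> 0" unfolding r_def poly_prod_lin using v(2) v1
    by (auto simp: prod_list_zero_iff)
  have st: "\<forall>z. 0 < Im z \<longrightarrow> 0 \<le> 1 * Im ((z - of_real v) ^ m * H z)"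
  proof (intro allI impI)
    fix z :: complex assume z: "0 < Im z"
    have "(\<Prod>y\<leftarrow>ys. z - of_real y) = (z - of_real v) ^ m * (\<Prod>y\<leftarrow>ys1. z - of_real y)"
      unfolding m_def ys1_def by (rule prod_split_count)
    then have eqn: "(\<Prod>y\<leftarrow>ys. z - of_real y) * cnj (\<Prod>x\<leftarrow>xs. z - of_real x) = (z - of_real v) ^ m * H z"
      unfolding H_def cev_prod by simp
    have "0 \<le> Im ((\<Prod>y\<leftarrow>ys. z - of_real y) * cnj (\<Prod>x\<leftarrow>xs. z - of_real x))" using stab z by blast
    then have "0 \<le> Im ((z - of_real v) ^ m * H z)" unfolding eqn .
    then show "0 \<le> 1 * Im ((z - of_real v) ^ m * H z)" by simp
  qed
  have lr: "m = 1 \<and> 0 < 1 * r" by (rule local_root[OF cont Hv r0 _ m st]) simp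
  have s1: "0 < poly (\<Prod>y\<leftarrow>ys1. [:-y, 1:]) v * (-1) ^ rho ys v"
    unfolding poly_prod_lin using sign_prod[OF v1] by (simp add: ys1_def rho_filter_ne)
  have s2: "0 < poly (\<Prod>x\<leftarrow>xs. [:-x, 1:]) v * (-1) ^ rho xs v"
    unfolding poly_prod_lin by (rule sign_prod[OF v(2)])
  have "0 < (poly (\<Prod>y\<leftarrow>ys1. [:-y, 1:]) v * (-1) ^ rho ys v) * (poly (\<Prod>x\<leftarrow>xs. [:-x, 1:]) v * (-1) ^ rho xs v)"
    using s1 s2 by simp
  also have "\<dots> = r * (-1) ^ (rho ys v + rho xs v)" unfolding r_def by (simp add: power_add algebra_simps)
  finally have "0 < (-1::real) ^ (rho ys v + rho xs v)" using lr by (simp add: zero_less_mult_iff)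
  then have "even (rho ys v + rho xs v)" by (rule neg_pow_even)
  then show ?thesis using lr m_def by simp
qed

lemma interlace_stab:
  fixes xs ys :: "real list"
  assumes "length xs = length ys"
    and "\<forall>z. 0 < Im z \<longrightarrow> 0 \<le> Im ((\<Prod>y\<leftarrow>ys. z - of_real y) * cnj (\<Prod>x\<leftarrow>xs. z - of_real x))"
  shows "rho xs x \<le> rho ys x \<and> rho ys x \<le> rho xs x + 1"
  using assms
proof (induction "length xs" arbitrary: xs ys x rule: less_induct)
  case less
  show ?case
  proof (cases "\<exists>u. u \<in> set xs \<and> u \<in> set ys")
    case True
    then obtain u where u: "u \<in> set xs" "u \<in> set ys" by blast
    define xs' where "xs' = remove1 u xs"
    define ys' where "ys' = remove1 u ys"
    have lx: "length xs' < length xs" unfolding xs'_def using length_pos_if_in_set[OF u(1)] u by (simp add: length_remove1)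
    have lxy: "length xs' = length ys'" unfolding xs'_def ys'_def using u less.prems(1) by (simp add: length_remove1)
    have st: "\<forall>z. 0 < Im z \<longrightarrow> 0 \<le> Im ((\<Prod>y\<leftarrow>ys'. z - of_real y) * cnj (\<Prod>x\<leftarrow>xs'. z - of_real x))"
    proof (intro allI impI)
      fix z :: complex assume z: "0 < Im z"
      have px: "(\<Prod>x\<leftarrow>xs. z - of_real x) = (z - of_real u) * (\<Prod>x\<leftarrow>xs'. z - of_real x)"
        unfolding xs'_def by (rule prod_remove1[OF u(1)])
      have py: "(\<Prod>y\<leftarrow>ys. z - of_real y) = (z - of_real u) * (\<Prod>y\<leftarrow>ys'. z - of_real y)"
        unfolding ys'_def by (rule prod_remove1[OF u(2)])
      have "0 \<le> Im ((\<Prod>y\<leftarrow>ys. z - of_real y) * cnj (\<Prod>x\<leftarrow>xs. z - of_real x))"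
        using less.prems(2) z by simp
      then have "0 \<le> (cmod (z - of_real u))^2 * Im ((\<Prod>y\<leftarrow>ys'. z - of_real y) * cnj (\<Prod>x\<leftarrow>xs'. z - of_real x))"
        unfolding px py mult_cnj_scale .
      moreover have "0 < (cmod (z - of_real u))^2" using z by auto
      ultimately show "0 \<le> Im ((\<Prod>y\<leftarrow>ys'. z - of_real y) * cnj (\<Prod>x\<leftarrow>xs'. z - of_real x))"
        by (simp add: zero_le_mult_iff)
    qed
    have IH: "rho xs' x \<le> rho ys' x \<and> rho ys' x \<le> rho xs' x + 1"
      using less.hyps[OF lx lxy st] by blast
    then show ?thesis
      using rho_remove1[OF u(1), of x] rho_remove1[OF u(2), of x] unfolding xs'_def ys'_def by auto
  next
    case False
    then have disj: "set xs \<inter> set ys = {}" by auto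
    show ?thesis
    proof (rule parity_interlace[OF disj])
      show "\<forall>u\<in>set xs. count_list xs u = 1 \<and> odd (rho ys u + rho xs u)"
        using root_info_x[OF _ _ less.prems(2)] disj by blast
      show "\<forall>v\<in>set ys. count_list ys v = 1 \<and> even (rho ys v + rho xs v)"
        using root_info_y[OF _ _ less.prems(2)] disj by blast
    qed
  qed
qed


definition good :: "nat \<Rightarrow> (real poly \<Rightarrow> real poly) \<Rightarrow> bool" where
  "good d T \<longleftrightarrow> (\<exists>c :: complex \<Rightarrow> nat \<Rightarrow> complex.
     (\<forall>as. length as = d \<longrightarrow> degree (T (\<Prod>x\<leftarrow>as. [:-x, 1:])) \<le> d \<and> coeff (T (\<Prod>x\<leftarrow>as. [:-x, 1:])) d = 1) \<and>
     (\<forall>as z. length as = d \<longrightarrow> cev (T (\<Prod>x\<leftarrow>as. [:-x, 1:])) z = FF (c z) d (map of_real as)) \<and>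
     (\<forall>z t. 0 < Im z \<longrightarrow> Im t \<le> 0 \<longrightarrow> FF (c z) d (replicate d t) \<noteq> 0))"

definition cnt :: "real list \<Rightarrow> real \<Rightarrow> nat" where
  "cnt L x = length (filter (\<lambda>y. y \<le> x) L)"

lemma cnt_rho: "cnt L x + rho L x = length L"
  unfolding cnt_def rho_def by (induction L) auto

lemma order_prod_lin: "order a (\<Prod>x\<leftarrow>L. [:-x, 1:]) = count_list L a"
proof (induction L)
  case Nil then show ?case by (simp add: order_0I)
next
  case (Cons b L)
  have nz: "(\<Prod>x\<leftarrow>L. [:-x, 1:]) \<noteq> 0" by (auto simp: prod_list_zero_iff simp del: mult_pCons_left)
  have "order a ([:-b, 1:] * (\<Prod>x\<leftarrow>L. [:-x, 1:])) = order a [:-b, 1:] + order a (\<Prod>x\<leftarrow>L. [:-x, 1:])"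
    using nz by (intro order_mult) (simp del: mult_pCons_left)
  moreover have "order a [:-b, 1:] = (if b = a then 1 else 0)"
  proof (cases "b = a")
    case True then show ?thesis using order_power_n_n[of a 1] by simp
  next
    case False then show ?thesis by (simp add: order_0I)
  qed
  ultimately show ?case using Cons by (simp del: mult_pCons_left)
qed

lemma rootcdf_prod: "rootcdf d (\<Prod>x\<leftarrow>L. [:-x, 1:]) x = real (cnt L x) / real d"
proof -
  have roots: "{a. poly (\<Prod>x\<leftarrow>L. [:-x, 1:]) a = 0 \<and> a \<le> x} = set (filter (\<lambda>y. y \<le> x) L)"
    unfolding poly_prod_lin by (auto simp: prod_list_zero_iff)
  have "(\<Sum>a\<in>{a. poly (\<Prod>x\<leftarrow>L. [:-x, 1:]) a = 0 \<and> a \<le> x}. order a (\<Prod>x\<leftarrow>L. [:-x, 1:]))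
      = (\<Sum>a\<in>set (filter (\<lambda>y. y \<le> x) L). count_list (filter (\<lambda>y. y \<le> x) L) a)"
    unfolding roots order_prod_lin
    by (intro sum.cong refl) (auto simp: count_list_eq_length_filter filter_filter intro!: arg_cong[where f=length] filter_cong)
  also have "\<dots> = length (filter (\<lambda>y. y \<le> x) L)" by (rule sum_count_set) auto
  finally show ?thesis unfolding rootcdf_def cnt_def by simp
qed

lemma onestep:
  assumes g: "good d T" and len: "length ss + 1 = d" and ab: "\<alpha> \<le> \<beta>"
  shows "rootcdf d (T (\<Prod>x\<leftarrow>\<beta>#ss. [:-x, 1:])) x \<le> rootcdf d (T (\<Prod>x\<leftarrow>\<alpha>#ss. [:-x, 1:])) x \<and>
         rootcdf d (T (\<Prod>x\<leftarrow>\<alpha>#ss. [:-x, 1:])) x \<le> rootcdf d (T (\<Prod>x\<leftarrow>\<beta>#ss. [:-x, 1:])) x + 1 / real d"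
proof -
  obtain c where monic: "\<forall>as. length as = d \<longrightarrow> degree (T (\<Prod>x\<leftarrow>as. [:-x, 1:])) \<le> d \<and> coeff (T (\<Prod>x\<leftarrow>as. [:-x, 1:])) d = 1"
    and eval: "\<forall>as z. length as = d \<longrightarrow> cev (T (\<Prod>x\<leftarrow>as. [:-x, 1:])) z = FF (c z) d (map of_real as)"
    and diag: "\<forall>z t. 0 < Im z \<longrightarrow> Im t \<le> 0 \<longrightarrow> FF (c z) d (replicate d t) \<noteq> 0"
    using g unfolding good_def by blast
  obtain xs where xs: "length xs = d" "T (\<Prod>x\<leftarrow>\<alpha>#ss. [:-x, 1:]) = (\<Prod>x\<leftarrow>xs. [:-x, 1:])"
    using frame_R[OF monic eval diag, of "\<alpha>#ss"] len by auto
  obtain ys where ys: "length ys = d" "T (\<Prod>x\<leftarrow>\<beta>#ss. [:-x, 1:]) = (\<Prod>x\<leftarrow>ys. [:-x, 1:])"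
    using frame_R[OF monic eval diag, of "\<beta>#ss"] len by auto
  have st: "\<forall>z. 0 < Im z \<longrightarrow> 0 \<le> Im ((\<Prod>y\<leftarrow>ys. z - of_real y) * cnj (\<Prod>x\<leftarrow>xs. z - of_real x))"
    using frame_S[OF eval diag len ab] unfolding xs(2) ys(2) cev_prod by blast
  have "rho xs x \<le> rho ys x \<and> rho ys x \<le> rho xs x + 1"
    by (rule interlace_stab) (use xs ys st in auto)
  then have "cnt ys x \<le> cnt xs x \<and> cnt xs x \<le> cnt ys x + 1"
    using cnt_rho[of xs x] cnt_rho[of ys x] xs(1) ys(1) by linarith
  then have "real (cnt ys x) \<le> real (cnt xs x) \<and> real (cnt xs x) \<le> real (cnt ys x) + 1" by linarith
  moreover have "0 < real d" using len by simp
  ultimately show ?thesis unfolding xs(2) ys(2) rootcdf_prod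
    by (simp add: divide_right_mono add_divide_distrib[symmetric])
qed

lemma prod_mid:
  "(\<Prod>x\<leftarrow>pre @ a # post. [:-x, 1:]) = (\<Prod>x\<leftarrow>a # (pre @ post). [:-x, 1:])"
  by (simp add: mult.left_commute del: mult_pCons_left)

lemma chain:
  assumes g: "good d T" and lu: "length u = d" and lv: "length v = d"
  shows "j \<le> d \<Longrightarrow> rootcdf d (T (\<Prod>x\<leftarrow>take j v @ drop j u. [:-x, 1:])) x \<le>
       rootcdf d (T (\<Prod>x\<leftarrow>u. [:-x, 1:])) x + (\<Sum>i<j. if v!i < u!i then 1 else 0) / real d"
proof (induction j)
  case 0 then show ?case by simp
next
  case (Suc j)
  then have jd: "j < d" by simp
  define pre where "pre = take j v"
  define post where "post = drop (Suc j) u"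
  have w1: "take j v @ drop j u = pre @ (u!j) # post"
    unfolding pre_def post_def using jd lu by (simp add: Cons_nth_drop_Suc)
  have w2: "take (Suc j) v @ drop (Suc j) u = pre @ (v!j) # post"
    unfolding pre_def post_def using jd lv by (simp add: take_Suc_conv_app_nth)
  have lss: "length (pre @ post) + 1 = d" unfolding pre_def post_def using jd lu lv by simp
  have IH: "rootcdf d (T (\<Prod>x\<leftarrow>u!j # (pre @ post). [:-x, 1:])) x \<le>
       rootcdf d (T (\<Prod>x\<leftarrow>u. [:-x, 1:])) x + (\<Sum>i<j. if v!i < u!i then 1 else 0) / real d"
    using Suc.IH jd unfolding w1 prod_mid by simp
  have step: "rootcdf d (T (\<Prod>x\<leftarrow>v!j # (pre @ post). [:-x, 1:])) x \<le>
      rootcdf d (T (\<Prod>x\<leftarrow>u!j # (pre @ post). [:-x, 1:])) x + (if v!j < u!j then 1 else 0) / real d"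
  proof (cases "v!j < u!j")
    case True
    then show ?thesis using onestep[OF g lss, of "v!j" "u!j" x] by simp
  next
    case False
    then show ?thesis using onestep[OF g lss, of "u!j" "v!j" x] by simp
  qed
  show ?case unfolding w2 prod_mid using IH step
    by (simp add: add_divide_distrib)
qed


lemma prod_perm:
  assumes "mset L = mset M"
  shows "(\<Prod>x\<leftarrow>L. f x) = (\<Prod>x\<leftarrow>M. (f x :: 'a::comm_monoid_mult))"
proof -
  have "mset (map f L) = mset (map f M)" using assms by simp
  then show ?thesis by (metis prod_mset_prod_list)
qed

lemma Pd_sorted:
  assumes "p \<in> Pd d UNIV"
  obtains as where "length as = d" "sorted as" "p = (\<Prod>x\<leftarrow>as. [:-x, 1:])"
proof -
  obtain xs where xs: "length xs = d" "p = (\<Prod>x\<leftarrow>xs. [:-x, 1:])" using assms unfolding Pd_def by auto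
  show ?thesis
    by (rule that[of "sort xs"]) (use xs in \<open>auto intro: prod_perm\<close>)
qed

lemma cnt_ge_idx:
  assumes "sorted L" "i < length L" "L ! i \<le> x"
  shows "i + 1 \<le> cnt L x"
proof -
  have all: "\<forall>y\<in>set (take (Suc i) L). y \<le> x"
  proof
    fix y assume "y \<in> set (take (Suc i) L)"
    then obtain k where k: "k < length (take (Suc i) L)" "y = take (Suc i) L ! k" by (metis in_set_conv_nth)
    then have "y = L ! k" "k \<le> i" by auto
    then show "y \<le> x" using assms sorted_nth_mono[OF assms(1), of k i] by auto
  qed
  have "cnt L x = length (filter (\<lambda>y. y \<le> x) (take (Suc i) L)) + length (filter (\<lambda>y. y \<le> x) (drop (Suc i) L))"
    unfolding cnt_def by (metis append_take_drop_id filter_append length_append)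
  also have "filter (\<lambda>y. y \<le> x) (take (Suc i) L) = take (Suc i) L" using all by simp
  finally show ?thesis using assms(2) by simp
qed

lemma cnt_le_idx:
  assumes "sorted L" "k < length L" "x < L ! k"
  shows "cnt L x \<le> k"
proof -
  have none: "filter (\<lambda>y. y \<le> x) (drop k L) = []"
  proof -
    have "\<forall>y\<in>set (drop k L). \<not> y \<le> x"
    proof
      fix y assume "y \<in> set (drop k L)"
      then obtain j where j: "j < length (drop k L)" "y = drop k L ! j" by (metis in_set_conv_nth)
      then have "y = L ! (k + j)" "k + j < length L" by auto
      then have "L ! k \<le> y" using sorted_nth_mono[OF assms(1), of k "k+j"] by auto
      then show "\<not> y \<le> x" using assms(3) by simp
    qed
    then show ?thesis by (simp add: filter_empty_conv)
  qed
  have "cnt L x = length (filter (\<lambda>y. y \<le> x) (take k L)) + length (filter (\<lambda>y. y \<le> x) (drop k L))"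
    unfolding cnt_def by (metis append_take_drop_id filter_append length_append)
  also have "\<dots> \<le> k" unfolding none using length_filter_le[of _ "take k L"] assms(2) by simp
  finally show ?thesis .
qed

lemma shift_from_cdf:
  assumes sa: "sorted as" "length as = d" and sc: "sorted cs" "length cs = d" and d: "0 < d"
    and hyp: "\<forall>x. rootcdf d (\<Prod>x\<leftarrow>cs. [:-x, 1:]) x \<le> rootcdf d (\<Prod>x\<leftarrow>as. [:-x, 1:]) x + real l / real d"
    and il: "l \<le> i" "i < d"
  shows "as ! (i - l) \<le> cs ! i"
proof (rule ccontr)
  assume "\<not> as ! (i - l) \<le> cs ! i"
  then have lt: "cs ! i < as ! (i - l)" by simp
  have c1: "i + 1 \<le> cnt cs (cs ! i)" by (rule cnt_ge_idx) (use sc il in auto)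
  have c2: "cnt as (cs ! i) \<le> i - l" by (rule cnt_le_idx) (use sa il lt in auto)
  have "real (cnt cs (cs!i)) / real d \<le> real (cnt as (cs!i)) / real d + real l / real d"
    using hyp[rule_format, of "cs ! i"] unfolding rootcdf_prod .
  then have "real (cnt cs (cs!i)) \<le> real (cnt as (cs!i)) + real l"
    using d by (simp add: add_divide_distrib[symmetric] divide_le_cancel)
  then show False using c1 c2 il by linarith
qed

lemma conseq:
  assumes g: "good d T" and p: "p \<in> Pd d UNIV" and q: "q \<in> Pd d UNIV" and ld: "l \<le> d"
    and hyp: "\<forall>x. rootcdf d q x \<le> rootcdf d p x + real l / real d"
  shows "rootcdf d (T q) x \<le> rootcdf d (T p) x + real l / real d"
proof (cases "d = 0")
  case True then show ?thesis by (simp add: rootcdf_def)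
next
  case False
  then have d: "0 < d" by simp
  obtain as where sa: "length as = d" "sorted as" "p = (\<Prod>x\<leftarrow>as. [:-x, 1:])" using Pd_sorted[OF p] by blast
  obtain cs where sc: "length cs = d" "sorted cs" "q = (\<Prod>x\<leftarrow>cs. [:-x, 1:])" using Pd_sorted[OF q] by blast
  have sh: "as ! (i - l) \<le> cs ! i" if "l \<le> i" "i < d" for i
    by (rule shift_from_cdf[OF sa(2,1) sc(2,1) d]) (use hyp sa sc that in auto)
  define u where "u = drop (d - l) as @ take (d - l) as"
  have lu: "length u = d" unfolding u_def using sa ld by simp
  have pu: "(\<Prod>x\<leftarrow>u. [:-x, 1:]) = p" unfolding u_def sa(3)
    by (rule prod_perm) (metis append_take_drop_id mset_append union_commute)
  have ui: "u ! i = as ! (i - l)" if "l \<le> i" "i < d" for i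
    unfolding u_def using that sa ld by (simp add: nth_append)
  have "rootcdf d (T (\<Prod>x\<leftarrow>take d cs @ drop d u. [:-x, 1:])) x \<le>
       rootcdf d (T (\<Prod>x\<leftarrow>u. [:-x, 1:])) x + (\<Sum>i<d. if cs!i < u!i then 1 else 0) / real d"
    by (rule chain[OF g lu sc(1)]) simp
  moreover have "take d cs @ drop d u = cs" using sc lu by simp
  moreover have "(\<Sum>i<d. if cs!i < u!i then 1 else 0) \<le> (\<Sum>i<d. if i < l then 1 else (0::real))"
  proof (intro sum_mono)
    fix i assume "i \<in> {..<d}"
    then show "(if cs!i < u!i then 1 else 0) \<le> (if i < l then 1 else (0::real))"
      using sh[of i] ui[of i] by (cases "i < l") auto
  qed
  moreover have "(\<Sum>i<d. if i < l then 1 else (0::real)) = real l"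
  proof -
    have "(\<Sum>i<d. if i < l then 1 else (0::real)) = (\<Sum>i\<in>{i \<in> {..<d}. i < l}. 1)"
      by (rule sum.inter_filter[symmetric]) simp
    also have "{i \<in> {..<d}. i < l} = {..<l}" using ld by auto
    finally show ?thesis by simp
  qed
  ultimately have A: "rootcdf d (T q) x \<le> rootcdf d (T p) x + (\<Sum>i<d. if cs!i < u!i then 1 else 0) / real d"
    and B: "(\<Sum>i<d. if cs!i < u!i then 1 else 0) \<le> real l"
    using sc(3) pu by auto
  have "(\<Sum>i<d. if cs!i < u!i then 1 else 0) / real d \<le> real l / real d"
    using B by (intro divide_right_mono) auto
  then show ?thesis using A by linarith
qed


lemma degree_prod_lin_le: "degree (\<Prod>x\<leftarrow>as. [:-x, 1:]) \<le> length as"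
  by (rule order.trans[OF degree_prod_list_le])
     (auto simp: sum_list_triv intro: order.trans[OF sum_list_mono[where g="\<lambda>_. 1"]])

lemma poly_le:
  fixes p :: "'a::comm_ring_1 poly"
  assumes "degree p \<le> N"
  shows "poly p x = (\<Sum>i\<le>N. coeff p i * x ^ i)"
  unfolding poly_altdef
  by (rule sum.mono_neutral_left) (use assms in \<open>auto simp: coeff_eq_0\<close>)

lemma poly_prod_esym:
  fixes as :: "'a::comm_ring_1 list"
  shows "poly (\<Prod>x\<leftarrow>as. [:-x, 1:]) z = (\<Sum>k\<le>length as. (-1)^k * esym as k * z ^ (length as - k))"
proof -
  let ?n = "length as"
  have "poly (\<Prod>x\<leftarrow>as. [:-x, 1:]) z = (\<Sum>i\<le>?n. coeff (\<Prod>x\<leftarrow>as. [:-x, 1:]) i * z ^ i)"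
    by (rule poly_le[OF degree_prod_lin_le])
  also have "\<dots> = (\<Sum>i\<in>{0..?n}. coeff (\<Prod>x\<leftarrow>as. [:-x, 1:]) (?n - i) * z ^ (?n - i))"
    by (subst sum.atLeastAtMost_rev) (simp add: atLeast0AtMost)
  also have "\<dots> = (\<Sum>k\<le>?n. (-1)^k * esym as k * z ^ (?n - k))"
    by (simp add: atLeast0AtMost coeff_prod_esym)
  finally show ?thesis .
qed

lemma etil_prod:
  assumes "length as = d" "k \<le> d"
  shows "etil d (\<Prod>x\<leftarrow>as. [:-x, 1:]) k = esym as k / real (d choose k)"
  unfolding etil_def using coeff_prod_esym[of k as] assms by simp

lemma poly_of_etil_deg: "degree (poly_of_etil d e) \<le> d"
  unfolding poly_of_etil_def
  by (intro degree_sum_le) (auto intro: order.trans[OF degree_monom_le])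

lemma poly_of_etil_lead: "coeff (poly_of_etil d e) d = e 0"
proof -
  have "coeff (poly_of_etil d e) d = (\<Sum>k\<le>d. if k = 0 then e k else 0)"
    unfolding poly_of_etil_def coeff_sum coeff_monom
    by (intro sum.cong refl) auto
  also have "\<dots> = e 0" by (simp add: sum.delta)
  finally show ?thesis .
qed

lemma cev_poly_of_etil:
  "cev (poly_of_etil d e) z = (\<Sum>k\<le>d. of_real ((-1)^k * real (d choose k) * e k) * z ^ (d - k))"
  unfolding poly_of_etil_def cev_sum cev_monom ..

lemma gws_lin:
  fixes \<alpha> :: "nat \<Rightarrow> complex" and L :: "complex list"
  assumes len: "length L = d" and L: "\<forall>b\<in>set L. Im b \<le> 0"
    and diag: "\<forall>s. Im s \<le> 0 \<longrightarrow> (\<Sum>i\<le>d. \<alpha> i * s ^ i) \<noteq> 0"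
  shows "(\<Sum>i\<le>d. \<alpha> i * (esym L i / of_nat (d choose i))) \<noteq> 0"
proof -
  define c where "c = (\<lambda>i. \<alpha> i / of_nat (d choose i))"
  have e1: "(\<Sum>i\<le>d. \<alpha> i * (esym L i / of_nat (d choose i))) = FF c d L"
    unfolding FF_def c_def by (intro sum.cong refl) simp
  have e2: "FF c d (replicate d s) = (\<Sum>i\<le>d. \<alpha> i * s ^ i)" for s
    unfolding FF_rep c_def by (intro sum.cong refl) simp
  show ?thesis unfolding e1 using gws[of c L] len L diag e2 by auto
qed


lemma poly_prod_lin_gen: "poly (\<Prod>x\<leftarrow>L. [:-x, 1:]) (u::'a::comm_ring_1) = (\<Prod>x\<leftarrow>L. u - x)"
proof (induction L)
  case Nil then show ?case by simp
next
  case (Cons a L)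
  have "poly (\<Prod>x\<leftarrow>a#L. [:-x, 1:]) u = poly [:-a, 1:] u * poly (\<Prod>x\<leftarrow>L. [:-x, 1:]) u"
    by (simp only: list.map prod_list.Cons poly_mult)
  moreover have p1: "poly [:-a, 1:] u = u - a" by (simp add: algebra_simps)
  ultimately show ?case by (simp only: p1 Cons.IH list.map prod_list.Cons)
qed

lemma Pd_list:
  assumes "r \<in> Pd d K"
  obtains bs where "length bs = d" "set bs \<subseteq> K" "r = (\<Prod>x\<leftarrow>bs. [:-x, 1:])"
  using assms unfolding Pd_def by auto

lemma esym_map_cplx: "esym (map complex_of_real as) k = complex_of_real (esym as k)"
  by (rule esym_map_of_real)

lemma good_boxtimes:
  assumes r: "r \<in> Pd d {0..}"
  shows "good d (\<lambda>p. boxtimes d p r)"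
proof -
  obtain bs where bs: "length bs = d" "set bs \<subseteq> {0..}" "r = (\<Prod>x\<leftarrow>bs. [:-x, 1:])"
    using Pd_list[OF r] by blast
  define c where "c = (\<lambda>z k. complex_of_real ((-1)^k * etil d r k) * z ^ (d - k))"
  show ?thesis unfolding good_def
  proof (intro exI[of _ c] conjI allI impI)
    fix as :: "real list" assume la: "length as = d"
    show "degree (boxtimes d (\<Prod>x\<leftarrow>as. [:-x, 1:]) r) \<le> d"
      unfolding boxtimes_def by (rule poly_of_etil_deg)
    show "coeff (boxtimes d (\<Prod>x\<leftarrow>as. [:-x, 1:]) r) d = 1"
      unfolding boxtimes_def poly_of_etil_lead using etil_prod[OF la, of 0] etil_prod[OF bs(1), of 0] bs(3)
      by simp
  next
    fix as :: "real list" and z assume la: "length as = d"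
    show "cev (boxtimes d (\<Prod>x\<leftarrow>as. [:-x, 1:]) r) z = FF (c z) d (map of_real as)"
      unfolding boxtimes_def cev_poly_of_etil FF_def esym_map_cplx
    proof (intro sum.cong refl)
      fix k assume k: "k \<in> {..d}"
      then have "real (d choose k) \<noteq> 0" by simp
      moreover have "etil d (\<Prod>x\<leftarrow>as. [:-x, 1:]) k = esym as k / real (d choose k)"
        using etil_prod[OF la] k by simp
      ultimately show "complex_of_real ((- 1) ^ k * real (d choose k) * (etil d (\<Prod>x\<leftarrow>as. [:-x, 1:]) k * etil d r k)) * z ^ (d - k) =
         c z k * complex_of_real (esym as k)"
        unfolding c_def by (simp add: field_simps) (metis of_real_mult of_real_of_nat_eq)
    qed
  next
    fix z t :: complex assume z: "0 < Im z" and t: "Im t \<le> 0"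
    have "FF (c z) d (replicate d t) = (\<Sum>k\<le>d. (-1)^k * esym (map (\<lambda>b. t * of_real b) bs) k * z ^ (d - k))"
      unfolding FF_rep
    proof (intro sum.cong refl)
      fix k assume k: "k \<in> {..d}"
      then have "real (d choose k) \<noteq> 0" by simp
      then show "c z k * of_nat (d choose k) * t ^ k = (-1)^k * esym (map (\<lambda>b. t * of_real b) bs) k * z ^ (d - k)"
        unfolding c_def using k etil_prod[OF bs(1), of k] bs(3)
        by (simp add: esym_scale[of t "map of_real bs", simplified comp_def map_map] esym_map_cplx field_simps) (metis of_real_mult of_real_of_nat_eq)
    qed
    also have "\<dots> = poly (\<Prod>x\<leftarrow>map (\<lambda>b. t * of_real b) bs. [:-x, 1:]) z"
      using poly_prod_esym[of "map (\<lambda>b. t * of_real b) bs" z] bs(1) by simp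
    also have "\<dots> = (\<Prod>b\<leftarrow>bs. z - t * of_real b)"
      unfolding poly_prod_lin_gen by (simp add: comp_def)
    also have "\<dots> \<noteq> 0"
    proof -
      have "z - t * of_real b \<noteq> 0" if "b \<in> set bs" for b
      proof -
        have "0 \<le> b" using that bs(2) by auto
        then have "Im (z - t * of_real b) > 0" using z t by simp (smt (verit) mult_nonpos_nonneg)
        then show ?thesis by auto
      qed
      then show ?thesis by (auto simp: prod_list_zero_iff)
    qed
    finally show "FF (c z) d (replicate d t) \<noteq> 0" .
  qed
qed


definition Psi :: "nat \<Rightarrow> complex \<Rightarrow> (nat \<Rightarrow> complex) \<Rightarrow> (nat \<Rightarrow> complex) \<Rightarrow> complex" where
  "Psi d z A B = (\<Sum>k\<le>d. (-1)^k * of_nat (d choose k) * z^(d-k) * (\<Sum>i\<le>k. of_nat (k choose i) * A i * B (k - i)))"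

definition alpha :: "nat \<Rightarrow> complex \<Rightarrow> (nat \<Rightarrow> complex) \<Rightarrow> nat \<Rightarrow> complex" where
  "alpha d z B i = (\<Sum>k\<le>d. if i \<le> k then (-1)^k * of_nat (d choose k) * z^(d-k) * of_nat (k choose i) * B (k - i) else 0)"

lemma inner_sym:
  "(\<Sum>i\<le>k. of_nat (k choose i) * A i * B (k - i)) = (\<Sum>i\<le>k. of_nat (k choose i) * B i * (A (k - i) :: complex))"
proof -
  have "(\<Sum>i\<le>k. of_nat (k choose i) * A i * B (k - i)) = (\<Sum>i\<in>{0..k}. of_nat (k choose i) * A i * B (k - i))"
    by (simp add: atLeast0AtMost)
  also have "\<dots> = (\<Sum>i\<in>{0..k}. of_nat (k choose (k - i)) * A (k - i) * B (k - (k - i)))"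
    by (subst sum.atLeastAtMost_rev) simp
  also have "\<dots> = (\<Sum>i\<in>{0..k}. of_nat (k choose i) * B i * A (k - i))"
    by (intro sum.cong refl) (auto simp: binomial_symmetric[symmetric])
  finally show ?thesis by (simp add: atLeast0AtMost)
qed

lemma Psi_sym: "Psi d z A B = Psi d z B A"
  unfolding Psi_def by (simp only: inner_sym[of _ A B])

lemma Psi_lin: "Psi d z A B = (\<Sum>i\<le>d. alpha d z B i * A i)"
proof -
  have "Psi d z A B = (\<Sum>k\<le>d. \<Sum>i\<le>d. if i \<le> k then (-1)^k * of_nat (d choose k) * z^(d-k) * of_nat (k choose i) * B (k - i) * A i else 0)"
    unfolding Psi_def
  proof (intro sum.cong refl)
    fix k assume k: "k \<in> {..d}"
    have "(\<Sum>i\<le>d. if i \<le> k then (-1)^k * of_nat (d choose k) * z^(d-k) * of_nat (k choose i) * B (k - i) * A i else 0)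
       = (\<Sum>i\<in>{i\<in>{..d}. i \<le> k}. (-1)^k * of_nat (d choose k) * z^(d-k) * of_nat (k choose i) * B (k - i) * A i)"
      by (rule sum.inter_filter[symmetric]) simp
    also have "{i\<in>{..d}. i \<le> k} = {..k}" using k by auto
    finally have X: "(\<Sum>i\<le>d. if i \<le> k then (-1)^k * of_nat (d choose k) * z^(d-k) * of_nat (k choose i) * B (k - i) * A i else 0)
       = (\<Sum>i\<le>k. (-1)^k * of_nat (d choose k) * z^(d-k) * of_nat (k choose i) * B (k - i) * A i)" .
    show "(-1)^k * of_nat (d choose k) * z^(d-k) * (\<Sum>i\<le>k. of_nat (k choose i) * A i * B (k - i)) =
       (\<Sum>i\<le>d. if i \<le> k then (-1)^k * of_nat (d choose k) * z^(d-k) * of_nat (k choose i) * B (k - i) * A i else 0)"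
      unfolding X sum_distrib_left by (simp only: mult_ac)
  qed
  also have "\<dots> = (\<Sum>i\<le>d. \<Sum>k\<le>d. if i \<le> k then (-1)^k * of_nat (d choose k) * z^(d-k) * of_nat (k choose i) * B (k - i) * A i else 0)"
    by (rule sum.swap)
  also have "\<dots> = (\<Sum>i\<le>d. alpha d z B i * A i)"
    unfolding alpha_def sum_distrib_right by (intro sum.cong refl) auto
  finally show ?thesis .
qed

lemma Psi_pow: "Psi d z (\<lambda>i. t^i) (\<lambda>j. s^j) = (z - (t + s))^d"
proof -
  have inner: "(\<Sum>i\<le>k. of_nat (k choose i) * t ^ i * s ^ (k - i)) = (t + s)^k" for k
    by (rule binomial_ring[symmetric])
  have "Psi d z (\<lambda>i. t^i) (\<lambda>j. s^j) = (\<Sum>k\<le>d. (-1)^k * of_nat (d choose k) * z^(d-k) * (t + s)^k)"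
    unfolding Psi_def by (simp only: inner)
  also have "\<dots> = (\<Sum>k\<le>d. of_nat (d choose k) * (-(t + s))^k * z^(d-k))"
  proof (intro sum.cong refl)
    fix k
    show "(-1)^k * of_nat (d choose k) * z^(d-k) * (t + s)^k = of_nat (d choose k) * (-(t + s))^k * z^(d-k)"
      by (subst power_minus) (simp only: mult_ac)
  qed
  also have "\<dots> = (-(t + s) + z)^d" by (rule binomial_ring[symmetric])
  also have "-(t + s) + z = z - (t + s)" by simp
  finally show ?thesis .
qed


lemma good_boxplus:
  assumes r: "r \<in> Pd d UNIV"
  shows "good d (\<lambda>p. boxplus d p r)"
proof -
  obtain bs where bs: "length bs = d" "r = (\<Prod>x\<leftarrow>bs. [:-x, 1:])"
    using Pd_list[OF r] by blast
  define Er where "Er = (\<lambda>j. complex_of_real (etil d r j))"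
  define c where "c = (\<lambda>z i. alpha d z Er i / of_nat (d choose i))"
  have Er_eq: "Er j = esym (map of_real bs) j / of_nat (d choose j)" if "j \<le> d" for j
    unfolding Er_def using etil_prod[OF bs(1) that] bs(2) by (simp add: esym_map_cplx)
  show ?thesis unfolding good_def
  proof (intro exI[of _ c] conjI allI impI)
    fix as :: "real list" assume la: "length as = d"
    show "degree (boxplus d (\<Prod>x\<leftarrow>as. [:-x, 1:]) r) \<le> d"
      unfolding boxplus_def by (rule poly_of_etil_deg)
    show "coeff (boxplus d (\<Prod>x\<leftarrow>as. [:-x, 1:]) r) d = 1"
      unfolding boxplus_def poly_of_etil_lead using etil_prod[OF la, of 0] etil_prod[OF bs(1), of 0] bs(2)
      by simp
  next
    fix as :: "real list" and z assume la: "length as = d"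
    define Ap where "Ap = (\<lambda>i. complex_of_real (etil d (\<Prod>x\<leftarrow>as. [:-x, 1:]) i))"
    have Ap_eq: "Ap i = esym (map of_real as) i / of_nat (d choose i)" if "i \<le> d" for i
      unfolding Ap_def using etil_prod[OF la that] by (simp add: esym_map_cplx)
    have "cev (boxplus d (\<Prod>x\<leftarrow>as. [:-x, 1:]) r) z = Psi d z Ap Er"
      unfolding boxplus_def cev_poly_of_etil Psi_def Ap_def Er_def
      by (intro sum.cong refl) (simp add: algebra_simps)
    also have "\<dots> = (\<Sum>i\<le>d. alpha d z Er i * Ap i)" by (rule Psi_lin)
    also have "\<dots> = FF (c z) d (map of_real as)"
      unfolding FF_def c_def by (intro sum.cong refl) (simp add: Ap_eq)
    finally show "cev (boxplus d (\<Prod>x\<leftarrow>as. [:-x, 1:]) r) z = FF (c z) d (map of_real as)" .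
  next
    fix z t :: complex assume z: "0 < Im z" and t: "Im t \<le> 0"
    have "FF (c z) d (replicate d t) = (\<Sum>i\<le>d. alpha d z Er i * t ^ i)"
      unfolding FF_rep c_def by (intro sum.cong refl) simp
    also have "\<dots> = Psi d z (\<lambda>i. t ^ i) Er" by (rule Psi_lin[symmetric])
    also have "\<dots> = Psi d z Er (\<lambda>i. t ^ i)" by (rule Psi_sym)
    also have "\<dots> = (\<Sum>j\<le>d. alpha d z (\<lambda>i. t ^ i) j * (esym (map of_real bs) j / of_nat (d choose j)))"
      unfolding Psi_lin by (intro sum.cong refl) (simp add: Er_eq)
    also have "\<dots> \<noteq> 0"
    proof (rule gws_lin)
      show "length (map complex_of_real bs) = d" using bs by simp
      show "\<forall>b\<in>set (map complex_of_real bs). Im b \<le> 0" by auto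
      show "\<forall>s. Im s \<le> 0 \<longrightarrow> (\<Sum>i\<le>d. alpha d z (\<lambda>i. t ^ i) i * s ^ i) \<noteq> 0"
      proof (intro allI impI)
        fix s :: complex assume s: "Im s \<le> 0"
        have "(\<Sum>i\<le>d. alpha d z (\<lambda>i. t ^ i) i * s ^ i) = Psi d z (\<lambda>i. s ^ i) (\<lambda>i. t ^ i)"
          by (rule Psi_lin[symmetric])
        also have "\<dots> = (z - (s + t))^d" by (rule Psi_pow)
        also have "\<dots> \<noteq> 0"
        proof -
          have "0 < Im (z - (s + t))" using z s t by simp
          then show ?thesis by auto
        qed
        finally show "(\<Sum>i\<le>d. alpha d z (\<lambda>i. t ^ i) i * s ^ i) \<noteq> 0" .
      qed
    qed
    finally show "FF (c z) d (replicate d t) \<noteq> 0" .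
  qed
qed


lemma cnt_dom:
  "list_all2 (\<lambda>a b. b \<le> a) L M \<Longrightarrow> cnt L x \<le> cnt M x"
proof (induction L M rule: list_all2_induct)
  case Nil then show ?case by (simp add: cnt_def)
next
  case (Cons a b L M) then show ?case by (auto simp: cnt_def)
qed

lemma part1:
  assumes p: "p \<in> Pd d UNIV" and q: "q \<in> Pd d UNIV" and ld: "l \<le> d"
    and hyp: "\<forall>x. rootcdf d q x \<le> rootcdf d p x + real l / real d"
  shows "\<exists>qs :: nat \<Rightarrow> real poly. qs 0 = q \<and> (\<forall>k\<le>l. qs k \<in> Pd d UNIV) \<and>
            (\<forall>k\<in>{1..l}. interlace d (qs (k - 1)) (qs k)) \<and> rleq d p (qs l)"
proof -
  obtain as where sa: "length as = d" "sorted as" "p = (\<Prod>x\<leftarrow>as. [:-x, 1:])" using Pd_sorted[OF p] by blast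
  obtain cs where sc: "length cs = d" "sorted cs" "q = (\<Prod>x\<leftarrow>cs. [:-x, 1:])" using Pd_sorted[OF q] by blast
  have sh: "as ! (i - l) \<le> cs ! i" if "l \<le> i" "i < d" for i
    by (rule shift_from_cdf[OF sa(2,1) sc(2,1)]) (use hyp sa sc that in auto)
  define f where "f = (\<lambda>k i. if l \<le> i + k then max (cs ! i) (as ! (i + k - l)) else cs ! i)"
  define Lk where "Lk = (\<lambda>k. map (f k) [0..<d])"
  define qs where "qs = (\<lambda>k. (\<Prod>x\<leftarrow>Lk k. [:-x, 1:]))"
  have lenL: "length (Lk k) = d" for k unfolding Lk_def by simp
  have nthL: "Lk k ! i = f k i" if "i < d" for k i unfolding Lk_def using that by simp
  have asm: "as ! i \<le> as ! j" if "i \<le> j" "j < d" for i j using sa sorted_nth_mono that by metis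
  have csm: "cs ! i \<le> cs ! j" if "i \<le> j" "j < d" for i j using sc sorted_nth_mono that by metis
  have L0: "Lk 0 = cs"
  proof (rule nth_equalityI)
    show "length (Lk 0) = length cs" using lenL sc by simp
    fix i assume "i < length (Lk 0)"
    then have i: "i < d" using lenL by simp
    show "Lk 0 ! i = cs ! i" unfolding nthL[OF i] f_def using sh[of i] i by auto
  qed
  have sortedL: "sorted (Lk k)" if "k \<le> l" for k
    unfolding sorted_iff_nth_mono lenL
  proof (intro allI impI)
    fix i j assume ij: "i \<le> j" "j < d"
    then have j: "j < d" and i: "i < d" by auto
    have cj: "cs ! j \<le> f k j" unfolding f_def by auto
    show "Lk k ! i \<le> Lk k ! j"
      unfolding nthL[OF j] nthL[OF i]
    proof (cases "l \<le> i + k")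
      case True
      then have "f k i = max (cs ! i) (as ! (i + k - l))" "f k j = max (cs ! j) (as ! (j + k - l))"
        using ij unfolding f_def by auto
      moreover have "cs ! i \<le> cs ! j" using csm ij j by simp
      moreover have "as ! (i + k - l) \<le> as ! (j + k - l)" using asm ij j that True by simp
      ultimately show "f k i \<le> f k j" using ij j by (auto simp: le_max_iff_disj)
    next
      case False
      then have "f k i = cs ! i" unfolding f_def by simp
      then show "f k i \<le> f k j" using csm[of i j] ij j cj by simp
    qed
  qed
  show ?thesis
  proof (intro exI[of _ qs] conjI ballI allI impI)
    show "qs 0 = q" unfolding qs_def L0 sc(3) ..
  next
    fix k assume "k \<le> l"
    show "qs k \<in> Pd d UNIV" unfolding qs_def Pd_def using lenL by auto
  next
    fix k assume k: "k \<in> {1..l}"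
    have ineq: "\<forall>i<d. Lk (k - 1) ! i \<le> Lk k ! i \<and> (Suc i < d \<longrightarrow> Lk k ! i \<le> Lk (k - 1) ! Suc i)"
    proof (intro allI impI conjI)
      fix i assume i: "i < d"
      show "Lk (k - 1) ! i \<le> Lk k ! i"
        unfolding nthL[OF i]
      proof (cases "l \<le> i + (k - 1)")
        case True
        then have "f (k - 1) i = max (cs ! i) (as ! (i + (k - 1) - l))" "f k i = max (cs ! i) (as ! (i + k - l))"
          using k unfolding f_def by auto
        moreover have "as ! (i + (k - 1) - l) \<le> as ! (i + k - l)"
        proof (rule asm)
          show "i + (k - 1) - l \<le> i + k - l" by arith
          show "i + k - l < d" using k i by auto
        qed
        ultimately show "f (k - 1) i \<le> f k i" by (auto simp: le_max_iff_disj)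
      next
        case False
        then show "f (k - 1) i \<le> f k i" unfolding f_def by auto
      qed
    next
      fix i assume i: "i < d" "Suc i < d"
      have c: "cs ! i \<le> cs ! Suc i" using csm i by simp
      show "Lk k ! i \<le> Lk (k - 1) ! Suc i"
        unfolding nthL[OF i(1)] nthL[OF i(2)]
      proof (cases "l \<le> i + k")
        case True
        have kk: "Suc i + (k - 1) = i + k" using k by auto
        have "f k i = max (cs ! i) (as ! (i + k - l))" using True unfolding f_def by simp
        moreover have "f (k - 1) (Suc i) = max (cs ! Suc i) (as ! (i + k - l))"
          using True unfolding f_def kk by simp
        ultimately show "f k i \<le> f (k - 1) (Suc i)" using c by (auto simp: le_max_iff_disj)
      next
        case False
        then have "f k i = cs ! i" unfolding f_def by simp
        moreover have "cs ! Suc i \<le> f (k - 1) (Suc i)" unfolding f_def by auto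
        ultimately show "f k i \<le> f (k - 1) (Suc i)" using c by simp
      qed
    qed
    show "interlace d (qs (k - 1)) (qs k)"
      unfolding interlace_def qs_def
    proof (rule exI[of _ "Lk (k - 1)"], rule exI[of _ "Lk k"], intro conjI)
    qed (use lenL ineq sortedL[of k] sortedL[of "k - 1"] k in auto)
  next
    show "rleq d p (qs l)"
      unfolding rleq_def
    proof
      fix x
      have "list_all2 (\<lambda>a b. b \<le> a) (Lk l) as"
        unfolding list_all2_conv_all_nth using lenL sa nthL by (auto simp: f_def)
      then have "cnt (Lk l) x \<le> cnt as x" by (rule cnt_dom)
      then show "rootcdf d (qs l) x \<le> rootcdf d p x"
        unfolding qs_def sa(3) rootcdf_prod by (intro divide_right_mono) auto
    qed
  qed
qed

theorem mainTheorem6: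
  fixes d l :: nat and p q :: "real poly"
  assumes "p \<in> Pd d UNIV" and "q \<in> Pd d UNIV" and "l \<le> d"
    and "\<forall>x. rootcdf d q x \<le> rootcdf d p x + real l / real d"
  shows "(\<exists>qs :: nat \<Rightarrow> real poly. qs 0 = q \<and> (\<forall>k\<le>l. qs k \<in> Pd d UNIV) \<and>
            (\<forall>k\<in>{1..l}. interlace d (qs (k - 1)) (qs k)) \<and> rleq d p (qs l))
       \<and> (\<forall>r\<in>Pd d UNIV. \<forall>x. rootcdf d (boxplus d q r) x \<le> rootcdf d (boxplus d p r) x + real l / real d)
       \<and> (\<forall>r\<in>Pd d {0..}. \<forall>x. rootcdf d (boxtimes d q r) x \<le> rootcdf d (boxtimes d p r) x + real l / real d)"
proof (intro conjI ballI allI)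
  show "\<exists>qs :: nat \<Rightarrow> real poly. qs 0 = q \<and> (\<forall>k\<le>l. qs k \<in> Pd d UNIV) \<and>
            (\<forall>k\<in>{1..l}. interlace d (qs (k - 1)) (qs k)) \<and> rleq d p (qs l)"
    by (rule part1[OF assms])
next
  fix r x assume "r \<in> Pd d UNIV"
  then show "rootcdf d (boxplus d q r) x \<le> rootcdf d (boxplus d p r) x + real l / real d"
    using conseq[OF good_boxplus assms] by blast
next
  fix r x assume "r \<in> Pd d {0..}"
  then show "rootcdf d (boxtimes d q r) x \<le> rootcdf d (boxtimes d p r) x + real l / real d"
    using conseq[OF good_boxtimes assms] by blast
qed


end
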